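(* Let $H$ be an $(\varepsilon,p)$-regular $k$-graph on vertex set $[n]$ ($n$ divisible by $q$) and run Procedure 1 on $H$. Condition on an outcome of Steps (1)–(2) for which $|I_e|=(1\pm(z+2)\varepsilon)\kappa$ for every edge $e$ of $H$ and every set of $k+t$ vertices, $1\le t\le 2q-k$, is condensed in at most $4q+1$ of the $D_{\sigma_i}$, so that the remaining randomness is the labelling in Step (3). Fix $d\in\{1,\dots,\ell\}$, two sets $A_1,A_2$ of $k-d$ vertices each, and a family $\mathcal B$ of $d$-sets of vertices such that $A_1\cup B$ and $A_2\cup B$ are both edges of $H$ for all $B\in\mathcal B$. Suppose $|\mathcal B|/\kappa^{2z+1}\gg\log n$. Then with probability $1-o(n^{-(k+2q)-1})$, the number $N_{\mathcal B}$ of $B\in\mathcal B$ such that both $A_1\cup B$ and $A_2\cup B$ lie in $\bigcup_iE(H'_i)$ is at most $7q|\mathcal B|/\kappa^{z}$.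
   Context: Fixed integers $k,\ell$ with $1\le\ell<k/2$; $z=\lceil(k-\ell)/\ell\rceil$, $q=\ell z$. $a_n\gg b_n$ means $a_n/b_n\to\infty$; $x=(1\pm a)y$ means $(1-a)y\le x\le(1+a)y$. A $k$-graph is a $k$-uniform hypergraph; an $n$-vertex $k$-graph $H$ is $(\varepsilon,p)$-regular if for every $d\in\{1,\dots,\ell\}$, $s\in\{1,\dots,2z+2\}$ and any $s$ distinct $(k-d)$-subsets $A_1,\dots,A_s$ with $|\bigcup_iA_i|\le k+2q$, the number of $d$-sets $D$ with all $A_i\cup D\in E(H)$ is $(1\pm\varepsilon)\frac{n^d}{d!}p^s$. For ordered $q$-tuples $\mathbf v_1=(v_1,\dots,v_q)$, $\mathbf v_2=(v_{q+1},\dots,v_{2q})$ let $e_i(\mathbf v_1,\mathbf v_2)=\{v_{i\ell+1},\dots,v_{i\ell+k}\}$, $i=0,\dots,z-1$; $\mathbf v_1$ precedes $\mathbf v_2$ if all are edges of $H$, and then $(\mathbf v_1,\mathbf v_2)$ owns these $z$ edges. For a permutation $\sigma$ of $[n]$, $D_\sigma$ has vertex set $\{(\sigma((i-1)q+1),\dots,\sigma(iq)):i\le n/q\}$ and arc $\mathbf v\to\mathbf w$ ($\mathbf v\ne\mathbf w$) iff $\mathbf v$ precedes $\mathbf w$. Procedure 1: $\kappa=\frac{6(k+1)\log n}{\varepsilon^2}$, $r=\frac{\ell qn^{k-2}}{k!p^{z-1}}\kappa$. (1) Independent uniform random permutations $\sigma_1,\dots,\sigma_r$ of $[n]$. (2)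 $H_i$ = edges of $H$ owned by arcs of $D_{\sigma_i}$. (3) For each edge $e$, $I_e=\{i:e\in H_i\}$; if nonempty, independently label $e$ by a uniform random element of $I_e$. (4) $D'_{\sigma_i}$ keeps an arc of $D_{\sigma_i}$ iff all $z$ edges it owns are labelled $i$. (5) $H'_i$ = edges owned by arcs of $D'_{\sigma_i}$. Each edge $e$ is owned by at most one arc of $D_{\sigma_i}$; if it exists, $\phi_i(e)$ is the set of $z$ edges owned by that arc. A set $S$ of $k+t$ vertices is condensed in $D_{\sigma_i}$ if there are edges $e_1\neq e_2$ of $H$ with $S=e_1\cup e_2$ and $\phi_i(e_1)\cap\phi_i(e_2)\neq\emptyset$. *)

theory Defs
  imports "HOL-Probability.Probability"
begin

definition zpar :: "nat \<Rightarrow> nat \<Rightarrow> nat" where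
  "zpar k l = nat \<lceil>real (k - l) / real l\<rceil>"

definition qpar :: "nat \<Rightarrow> nat \<Rightarrow> nat" where
  "qpar k l = l * zpar k l"

definition tup :: "nat \<Rightarrow> nat \<Rightarrow> (nat \<Rightarrow> nat) \<Rightarrow> nat \<Rightarrow> nat list" where
  "tup k l \<sigma> a = map \<sigma> [a * qpar k l + 1 ..< a * qpar k l + qpar k l + 1]"

(* e_i(v1,v2) = {v_{i l+1},...,v_{i l+k}} where (v_1,...,v_{2q}) = v1 @ v2 *)
definition eseg :: "nat \<Rightarrow> nat \<Rightarrow> nat list \<Rightarrow> nat list \<Rightarrow> nat \<Rightarrow> nat set" where
  "eseg k l v w i = set (map (\<lambda>j. (v @ w) ! (i * l + j)) [0..<k])"

definition owned :: "nat \<Rightarrow> nat \<Rightarrow> nat list \<times> nat list \<Rightarrow> nat set set" where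
  "owned k l a = {eseg k l (fst a) (snd a) i | i. i < zpar k l}"

definition precedes :: "nat \<Rightarrow> nat \<Rightarrow> nat set set \<Rightarrow> nat list \<Rightarrow> nat list \<Rightarrow> bool" where
  "precedes k l H v w \<longleftrightarrow> (\<forall>i < zpar k l. eseg k l v w i \<in> H)"

definition arcs :: "nat \<Rightarrow> nat \<Rightarrow> nat \<Rightarrow> nat set set \<Rightarrow> (nat \<Rightarrow> nat) \<Rightarrow> (nat list \<times> nat list) set" where
  "arcs k l n H \<sigma> = {(tup k l \<sigma> a, tup k l \<sigma> b) | a b.
      a < n div qpar k l \<and> b < n div qpar k l \<and> tup k l \<sigma> a \<noteq> tup k l \<sigma> b \<and>
      precedes k l H (tup k l \<sigma> a) (tup k l \<sigma> b)}"

definition Hsub :: "nat \<Rightarrow> nat \<Rightarrow> nat \<Rightarrow> nat set set \<Rightarrow> (nat \<Rightarrow> nat) \<Rightarrow> nat set set" where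
  "Hsub k l n H \<sigma> = (\<Union>a \<in> arcs k l n H \<sigma>. owned k l a)"

definition Iset :: "nat \<Rightarrow> nat \<Rightarrow> nat \<Rightarrow> nat set set \<Rightarrow> (nat \<Rightarrow> nat \<Rightarrow> nat) \<Rightarrow> nat \<Rightarrow> nat set \<Rightarrow> nat set" where
  "Iset k l n H \<sigma>s r e = {i. i < r \<and> e \<in> Hsub k l n H (\<sigma>s i)}"

(* Step (3): independent uniform labels, for edges with I_e nonempty *)
definition label_pmf :: "nat \<Rightarrow> nat \<Rightarrow> nat \<Rightarrow> nat set set \<Rightarrow> (nat \<Rightarrow> nat \<Rightarrow> nat) \<Rightarrow> nat \<Rightarrow> (nat set \<Rightarrow> nat) pmf" where
  "label_pmf k l n H \<sigma>s r =
     Pi_pmf {e \<in> H. Iset k l n H \<sigma>s r e \<noteq> {}} 0 (\<lambda>e. pmf_of_set (Iset k l n H \<sigma>s r e))"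

definition Hprime :: "nat \<Rightarrow> nat \<Rightarrow> nat \<Rightarrow> nat set set \<Rightarrow> (nat \<Rightarrow> nat \<Rightarrow> nat) \<Rightarrow> (nat set \<Rightarrow> nat) \<Rightarrow> nat \<Rightarrow> nat set set" where
  "Hprime k l n H \<sigma>s lab i =
     (\<Union>a \<in> {a \<in> arcs k l n H (\<sigma>s i). \<forall>e \<in> owned k l a. lab e = i}. owned k l a)"

definition condensed :: "nat \<Rightarrow> nat \<Rightarrow> nat \<Rightarrow> nat set set \<Rightarrow> (nat \<Rightarrow> nat) \<Rightarrow> nat set \<Rightarrow> bool" where
  "condensed k l n H \<sigma> S \<longleftrightarrow>
     (\<exists>e1 e2 a1 a2. e1 \<in> H \<and> e2 \<in> H \<and> e1 \<noteq> e2 \<and> S = e1 \<union> e2 \<and>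
        a1 \<in> arcs k l n H \<sigma> \<and> a2 \<in> arcs k l n H \<sigma> \<and>
        e1 \<in> owned k l a1 \<and> e2 \<in> owned k l a2 \<and> owned k l a1 \<inter> owned k l a2 \<noteq> {})"

definition kgraph :: "nat \<Rightarrow> nat \<Rightarrow> nat set set \<Rightarrow> bool" where
  "kgraph k n H \<longleftrightarrow> (\<forall>e \<in> H. e \<subseteq> {1..n} \<and> card e = k)"

definition regular :: "nat \<Rightarrow> nat \<Rightarrow> nat \<Rightarrow> nat set set \<Rightarrow> real \<Rightarrow> real \<Rightarrow> bool" where
  "regular k l n H \<epsilon> p \<longleftrightarrow>
     (\<forall>d \<in> {1..l}. \<forall>s \<in> {1..2 * zpar k l + 2}. \<forall>\<A>.
        \<A> \<subseteq> {A. A \<subseteq> {1..n} \<and> card A = k - d} \<and> card \<A> = s \<and>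
        card (\<Union>\<A>) \<le> k + 2 * qpar k l \<longrightarrow>
        (let c = real (card {D. D \<subseteq> {1..n} \<and> card D = d \<and> (\<forall>A \<in> \<A>. A \<union> D \<in> H)});
             m = real n ^ d / fact d * p ^ s
         in (1 - \<epsilon>) * m \<le> c \<and> c \<le> (1 + \<epsilon>) * m))"

definition kappa :: "nat \<Rightarrow> nat \<Rightarrow> real \<Rightarrow> real" where
  "kappa k n \<epsilon> = 6 * (real k + 1) * ln (real n) / \<epsilon>\<^sup>2"

definition rpar :: "nat \<Rightarrow> nat \<Rightarrow> nat \<Rightarrow> real \<Rightarrow> real \<Rightarrow> nat" where
  "rpar k l n \<epsilon> p = nat \<lceil>real l * real (qpar k l) * real n ^ (k - 2)
       / (fact k * p ^ (zpar k l - 1)) * kappa k n \<epsilon>\<rceil>"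

end

theory Submission
  imports Defs
begin

definition avg :: "'a set \<Rightarrow> ('a \<Rightarrow> real) \<Rightarrow> real" where
  "avg \<Omega> g = (\<Sum>f\<in>\<Omega>. g f) / real (card \<Omega>)"

lemma avg_mono:
  assumes "\<And>x. x \<in> \<Omega> \<Longrightarrow> f x \<le> g x"
  shows "avg \<Omega> f \<le> avg \<Omega> g"
  unfolding avg_def by (intro divide_right_mono sum_mono assms) auto

lemma avg_cmult: "avg \<Omega> (\<lambda>x. c * f x) = c * avg \<Omega> f"
  unfolding avg_def by (simp add: sum_distrib_left)

lemma avg_const: "finite \<Omega> \<Longrightarrow> \<Omega> \<noteq> {} \<Longrightarrow> avg \<Omega> (\<lambda>_. c) = c"
  unfolding avg_def by simp

lemma avg_diff: "avg \<Omega> (\<lambda>x. f x - g x) = avg \<Omega> f - avg \<Omega> g"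
  unfolding avg_def by (simp add: sum_subtractf diff_divide_distrib)

lemma avg_abs: "\<bar>avg \<Omega> f\<bar> \<le> avg \<Omega> (\<lambda>x. \<bar>f x\<bar>)"
  unfolding avg_def by (simp add: abs_div_pos order_trans[OF sum_abs] divide_right_mono)

lemma hoeffding_finite:
  fixes h :: "'b \<Rightarrow> real"
  assumes fin: "finite Y" and ne: "Y \<noteq> {}" and rng: "\<And>y. y \<in> Y \<Longrightarrow> h y \<in> {a..b}" and lam: "l \<ge> 0"
  shows "avg Y (\<lambda>y. exp (l * (h y - avg Y h))) \<le> exp (l\<^sup>2 * (b - a)\<^sup>2 / 8)"
proof (cases "l = 0")
  case True thus ?thesis using fin ne by (simp add: avg_const)
next
  case False
  hence lp: "l > 0" using lam by simp
  interpret interval_bounded_random_variable "measure_pmf (pmf_of_set Y)" h a b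
    by unfold_locales (use fin ne rng in \<open>auto simp: AE_measure_pmf_iff\<close>)
  have E: "measure_pmf.expectation (pmf_of_set Y) h = avg Y h" using integral_pmf_of_set[OF ne fin, of h] unfolding avg_def by simp
  define F where "F = (\<lambda>y. exp (l * (h y - measure_pmf.expectation (pmf_of_set Y) h)))"
  have cp: "real (card Y) > 0" using fin ne by (simp add: card_gt_0_iff)
  have "nn_integral (measure_pmf (pmf_of_set Y)) (\<lambda>y. ennreal (F y)) = (\<Sum>y\<in>Y. ennreal (F y)) / of_nat (card Y)"
    by (rule nn_integral_pmf_of_set[OF ne fin])
  also have "\<dots> = ennreal (\<Sum>y\<in>Y. F y) / ennreal (real (card Y))"
    by (subst sum_ennreal) (auto simp: F_def ennreal_of_nat_eq_real_of_nat)
  also have "\<dots> = ennreal (avg Y F)"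
    unfolding avg_def by (rule divide_ennreal) (use cp in \<open>auto simp: F_def intro: sum_nonneg\<close>)
  finally have eq: "ennreal (avg Y F) = nn_integral (measure_pmf (pmf_of_set Y)) (\<lambda>y. ennreal (F y))" by simp
  have "ennreal (avg Y F) \<le> ennreal (exp (l\<^sup>2 * (b - a)\<^sup>2 / 8))"
    unfolding eq using Hoeffdings_lemma_nn_integral[OF lp] unfolding F_def .
  hence "avg Y F \<le> exp (l\<^sup>2 * (b - a)\<^sup>2 / 8)" by (subst (asm) ennreal_le_iff) auto
  thus ?thesis unfolding F_def E .
qed

lemma PiE_dflt_insert_img:
  assumes "x \<notin> S"
  shows "PiE_dflt (insert x S) d B = (\<lambda>(y,w). w(x:=y)) ` (B x \<times> PiE_dflt S d B)"
proof (intro equalityI subsetI)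
  fix f assume f: "f \<in> PiE_dflt (insert x S) d B"
  have "f = (\<lambda>(y,w). w(x:=y)) (f x, f(x:=d))" by simp
  moreover have "(f x, f(x:=d)) \<in> B x \<times> PiE_dflt S d B"
    using f assms by (auto simp: PiE_dflt_def)
  ultimately show "f \<in> (\<lambda>(y,w). w(x:=y)) ` (B x \<times> PiE_dflt S d B)" by blast
qed (use assms in \<open>auto simp: PiE_dflt_def\<close>)

lemma PiE_dflt_insert_inj:
  assumes "x \<notin> S"
  shows "inj_on (\<lambda>(y,w). w(x:=y)) (B x \<times> PiE_dflt S d B)"
proof (rule inj_onI, clarify)
  fix y w y' w' assume a: "w \<in> PiE_dflt S d B" "w' \<in> PiE_dflt S d B" "w(x := y) = w'(x := y')"
  have "y = y'" using fun_cong[OF a(3), of x] by simp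
  moreover have "w = w'"
  proof
    fix z show "w z = w' z"
      using fun_cong[OF a(3), of z] a(1,2) assms by (cases "z = x") (auto simp: PiE_dflt_def)
  qed
  ultimately show "y = y' \<and> w = w'" by simp
qed

lemma PiE_dflt_insert_sum:
  assumes "finite S" "x \<notin> S" "finite (B x)" "\<And>z. z \<in> S \<Longrightarrow> finite (B z)"
  shows "(\<Sum>f\<in>PiE_dflt (insert x S) d B. F f) = (\<Sum>w\<in>PiE_dflt S d B. \<Sum>y\<in>B x. F (w(x:=y)))"
proof -
  have "(\<Sum>f\<in>PiE_dflt (insert x S) d B. F f) = (\<Sum>p\<in>B x \<times> PiE_dflt S d B. F ((\<lambda>(y,w). w(x:=y)) p))"
    unfolding PiE_dflt_insert_img[OF assms(2)] by (rule sum.reindex[OF PiE_dflt_insert_inj[OF assms(2)], unfolded comp_def])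
  also have "\<dots> = (\<Sum>y\<in>B x. \<Sum>w\<in>PiE_dflt S d B. F (w(x:=y)))"
    by (subst sum.cartesian_product) (simp add: case_prod_beta)
  also have "\<dots> = (\<Sum>w\<in>PiE_dflt S d B. \<Sum>y\<in>B x. F (w(x:=y)))"
    by (rule sum.swap)
  finally show ?thesis .
qed

lemma PiE_dflt_insert_avg:
  assumes "finite S" "x \<notin> S" "\<And>z. z \<in> insert x S \<Longrightarrow> finite (B z) \<and> B z \<noteq> {}"
  shows "avg (PiE_dflt (insert x S) d B) F = avg (PiE_dflt S d B) (\<lambda>w. avg (B x) (\<lambda>y. F (w(x:=y))))"
proof -
  have c1: "card (PiE_dflt (insert x S) d B) = card (B x) * card (PiE_dflt S d B)"
  proof -
    have "card (PiE_dflt (insert x S) d B) = (\<Prod>z\<in>insert x S. card (B z))"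
      by (rule card_PiE_dflt) (use assms in auto)
    moreover have "card (PiE_dflt S d B) = (\<Prod>z\<in>S. card (B z))"
      by (rule card_PiE_dflt) (use assms in auto)
    ultimately show ?thesis using assms by simp
  qed
  have "card (B x) > 0" using assms by (simp add: card_gt_0_iff)
  moreover have "card (PiE_dflt S d B) > 0"
    using assms by (subst card_gt_0_iff) (auto intro!: finite_PiE_dflt)
  ultimately show ?thesis
  proof -
    have s: "(\<Sum>f\<in>PiE_dflt (insert x S) d B. F f) = (\<Sum>w\<in>PiE_dflt S d B. \<Sum>y\<in>B x. F (w(x:=y)))"
      by (rule PiE_dflt_insert_sum) (use assms in auto)
    assume "card (B x) > 0" "card (PiE_dflt S d B) > 0"
    thus ?thesis unfolding avg_def c1 s
      by (simp add: sum_divide_distrib[symmetric] field_simps)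
  qed
qed

lemma mcdiarmid_exp:
  fixes S :: "'a set" and B :: "'a \<Rightarrow> 'b set" and g :: "('a \<Rightarrow> 'b) \<Rightarrow> real" and c :: "'a \<Rightarrow> real"
  assumes "finite S" "\<And>x. x \<in> S \<Longrightarrow> finite (B x) \<and> B x \<noteq> {}" "l \<ge> 0"
    "\<And>f x y. f \<in> PiE_dflt S d B \<Longrightarrow> x \<in> S \<Longrightarrow> y \<in> B x \<Longrightarrow> \<bar>g (f(x:=y)) - g f\<bar> \<le> c x"
  shows "avg (PiE_dflt S d B) (\<lambda>f. exp (l * (g f - avg (PiE_dflt S d B) g))) \<le> exp (l\<^sup>2 * (\<Sum>x\<in>S. (c x)\<^sup>2) / 8)"
  using assms(1,2,4)
proof (induction S arbitrary: g rule: finite_induct)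
  case empty
  have "PiE_dflt {} d B = {\<lambda>_. d}" by (auto simp: PiE_dflt_def)
  thus ?case by (simp add: avg_def)
next
  case (insert x S g)
  define \<Omega> where "\<Omega> = PiE_dflt S d B"
  define \<Omega>' where "\<Omega>' = PiE_dflt (insert x S) d B"
  have fin: "\<And>z. z \<in> insert x S \<Longrightarrow> finite (B z) \<and> B z \<noteq> {}" using insert.prems(1) by blast
  have finx: "finite (B x)" "B x \<noteq> {}" using fin by auto
  define G where "G = (\<lambda>w. avg (B x) (\<lambda>y. g (w(x:=y))))"
  have mem: "w(x:=y) \<in> \<Omega>'" if "w \<in> \<Omega>" "y \<in> B x" for w y
    using that insert.hyps(2) by (auto simp: \<Omega>_def \<Omega>'_def PiE_dflt_def)
  have A: "avg \<Omega>' g = avg \<Omega> G"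
    unfolding \<Omega>'_def \<Omega>_def G_def by (rule PiE_dflt_insert_avg[OF insert.hyps(1,2) fin])
  have LG: "\<bar>G (f(z:=y)) - G f\<bar> \<le> c z" if f: "f \<in> \<Omega>" and z: "z \<in> S" and y: "y \<in> B z" for f z y
  proof -
    have "G (f(z:=y)) - G f = avg (B x) (\<lambda>y'. g ((f(x:=y'))(z:=y)) - g (f(x:=y')))"
      unfolding G_def avg_diff[symmetric] using z insert.hyps(2)
      by (intro arg_cong[where f="avg (B x)"] ext) (metis fun_upd_twist)
    also have "\<bar>\<dots>\<bar> \<le> avg (B x) (\<lambda>y'. \<bar>g ((f(x:=y'))(z:=y)) - g (f(x:=y'))\<bar>)"
      by (rule avg_abs)
    also have "\<dots> \<le> avg (B x) (\<lambda>_. c z)"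
    proof (rule avg_mono)
      fix y' assume "y' \<in> B x"
      show "\<bar>g ((f(x:=y'))(z:=y)) - g (f(x:=y'))\<bar> \<le> c z"
        using insert.prems(2)[OF mem[OF f \<open>y' \<in> B x\<close>, unfolded \<Omega>'_def], of z y] z y by (simp add: fun_upd_def)
    qed
    also have "\<dots> = c z" using finx by (simp add: avg_const)
    finally show ?thesis .
  qed
  have IH: "avg \<Omega> (\<lambda>f. exp (l * (G f - avg \<Omega> G))) \<le> exp (l\<^sup>2 * (\<Sum>x\<in>S. (c x)\<^sup>2) / 8)"
    unfolding \<Omega>_def by (rule insert.IH) (use fin LG[unfolded \<Omega>_def] in \<open>blast+\<close>)
  have H: "avg (B x) (\<lambda>y. exp (l * (g (w(x:=y)) - G w))) \<le> exp (l\<^sup>2 * (c x)\<^sup>2 / 8)" if w: "w \<in> \<Omega>" for w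
  proof -
    define h where "h = (\<lambda>y. g (w(x:=y)))"
    define m where "m = Min (h ` B x)"
    have "h y \<in> {m..m + c x}" if y: "y \<in> B x" for y
    proof -
      obtain y0 where y0: "y0 \<in> B x" "m = h y0"
      proof -
        have "Min (h ` B x) \<in> h ` B x" using finx by (intro Min_in) auto
        thus ?thesis using that unfolding m_def by blast
      qed
      have "\<bar>g ((w(x:=y0))(x:=y)) - g (w(x:=y0))\<bar> \<le> c x"
        by (rule insert.prems(2)[OF mem[OF w y0(1), unfolded \<Omega>'_def]]) (use y in auto)
      hence "h y - m \<le> c x" by (simp add: h_def y0)
      moreover have "m \<le> h y" unfolding m_def using finx y by (intro Min_le) auto
      ultimately show ?thesis by simp
    qed
    from hoeffding_finite[OF finx this assms(3)]
    show ?thesis by (simp add: h_def G_def)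
  qed
  have "avg \<Omega>' (\<lambda>f. exp (l * (g f - avg \<Omega>' g)))
      = avg \<Omega> (\<lambda>w. avg (B x) (\<lambda>y. exp (l * (g (w(x:=y)) - avg \<Omega>' g))))"
    unfolding \<Omega>'_def \<Omega>_def by (rule PiE_dflt_insert_avg[OF insert.hyps(1,2) fin])
  also have "\<dots> = avg \<Omega> (\<lambda>w. exp (l * (G w - avg \<Omega> G)) * avg (B x) (\<lambda>y. exp (l * (g (w(x:=y)) - G w))))"
    unfolding A avg_cmult[symmetric]
    by (intro arg_cong[where f="avg \<Omega>"] arg_cong[where f="avg (B x)"] ext)
       (simp add: exp_add[symmetric] algebra_simps)
  also have "\<dots> \<le> avg \<Omega> (\<lambda>w. exp (l * (G w - avg \<Omega> G)) * exp (l\<^sup>2 * (c x)\<^sup>2 / 8))"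
    by (intro avg_mono mult_left_mono H) auto
  also have "\<dots> = exp (l\<^sup>2 * (c x)\<^sup>2 / 8) * avg \<Omega> (\<lambda>w. exp (l * (G w - avg \<Omega> G)))"
    by (subst avg_cmult[symmetric]) (simp add: mult.commute)
  also have "\<dots> \<le> exp (l\<^sup>2 * (c x)\<^sup>2 / 8) * exp (l\<^sup>2 * (\<Sum>x\<in>S. (c x)\<^sup>2) / 8)"
    by (intro mult_left_mono IH) auto
  also have "\<dots> = exp (l\<^sup>2 * (\<Sum>z\<in>insert x S. (c z)\<^sup>2) / 8)"
    using insert.hyps by (simp add: exp_add[symmetric] algebra_simps add_divide_distrib)
  finally show ?case unfolding \<Omega>'_def .
qed

lemma mcdiarmid_tail:
  fixes S :: "'a set" and B :: "'a \<Rightarrow> 'b set" and g :: "('a \<Rightarrow> 'b) \<Rightarrow> real" and c :: "'a \<Rightarrow> real"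
  assumes "finite S" "\<And>x. x \<in> S \<Longrightarrow> finite (B x) \<and> B x \<noteq> {}" "l \<ge> 0"
    "\<And>f x y. f \<in> PiE_dflt S d B \<Longrightarrow> x \<in> S \<Longrightarrow> y \<in> B x \<Longrightarrow> \<bar>g (f(x:=y)) - g f\<bar> \<le> c x"
  shows "real (card {f \<in> PiE_dflt S d B. g f \<ge> avg (PiE_dflt S d B) g + t}) / real (card (PiE_dflt S d B))
          \<le> exp (l\<^sup>2 * (\<Sum>x\<in>S. (c x)\<^sup>2) / 8 - l * t)"
proof -
  define \<Omega> where "\<Omega> = PiE_dflt S d B"
  define A where "A = avg \<Omega> g"
  have fin\<Omega>: "finite \<Omega>" unfolding \<Omega>_def using assms(1,2) by (intro finite_PiE_dflt) auto
  have "real (card {f \<in> \<Omega>. g f \<ge> A + t}) / real (card \<Omega>) = avg \<Omega> (\<lambda>f. if g f \<ge> A + t then 1 else 0)"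
    unfolding avg_def using fin\<Omega> by (simp add: sum.If_cases Int_def)
  also have "\<dots> \<le> avg \<Omega> (\<lambda>f. exp (l * (g f - A)) * exp (- l * t))"
  proof (intro avg_mono)
    fix f
    show "(if g f \<ge> A + t then 1 else 0) \<le> exp (l * (g f - A)) * exp (- l * t)"
    proof (cases "g f \<ge> A + t")
      case True
      hence "0 \<le> l * (g f - A - t)" using assms(3) by simp
      hence "1 \<le> exp (l * (g f - A - t))" by simp
      thus ?thesis using True by (simp add: exp_add[symmetric] algebra_simps)
    qed auto
  qed
  also have "\<dots> = exp (- l * t) * avg \<Omega> (\<lambda>f. exp (l * (g f - A)))"
    by (subst avg_cmult[symmetric]) (simp add: mult.commute)
  also have "\<dots> \<le> exp (- l * t) * exp (l\<^sup>2 * (\<Sum>x\<in>S. (c x)\<^sup>2) / 8)"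
    unfolding A_def \<Omega>_def by (intro mult_left_mono mcdiarmid_exp assms) auto
  also have "\<dots> = exp (l\<^sup>2 * (\<Sum>x\<in>S. (c x)\<^sup>2) / 8 - l * t)"
    by (simp add: exp_add[symmetric])
  finally show ?thesis unfolding \<Omega>_def A_def .
qed



lemma params:
  assumes "1 \<le> l" "2 * l < k"
  shows "2 \<le> zpar k l" "k - l \<le> qpar k l" "qpar k l < k" "k < 2 * qpar k l"
    "qpar k l = l * zpar k l" "0 < qpar k l"
proof -
  define x where "x = real (k - l) / real l"
  have lpos: "real l > 0" using assms by simp
  have kl: "real (k - l) = real k - real l" using assms by simp
  have x1: "x > 1" unfolding x_def using assms lpos kl by (simp add: field_simps)
  have z: "real (zpar k l) = real_of_int \<lceil>x\<rceil>" unfolding zpar_def x_def[symmetric]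
    using x1 by (simp add: of_nat_nat)
  have c1: "x \<le> real (zpar k l)" using z by simp
  have c2: "real (zpar k l) < x + 1" using z by linarith
  have "real l * x = real k - real l" unfolding x_def using lpos kl by simp
  hence lz1: "real k - real l \<le> real l * real (zpar k l)" using c1 lpos
    by (metis mult_left_mono less_imp_le)
  have lz2: "real l * real (zpar k l) < real k"
  proof -
    have "real l * real (zpar k l) < real l * (x + 1)" using c2 lpos by (rule mult_strict_left_mono)
    thus ?thesis using \<open>real l * x = real k - real l\<close> by (simp add: distrib_left)
  qed
  have "real (zpar k l) > 1" using c1 x1 by simp
  thus z2: "2 \<le> zpar k l" by linarith
  show "k - l \<le> qpar k l" using lz1 kl unfolding qpar_def by (simp flip: of_nat_mult)
  show "qpar k l < k" using lz2 unfolding qpar_def by (simp flip: of_nat_mult)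
  show "k < 2 * qpar k l" using lz1 assms unfolding qpar_def by (simp flip: of_nat_mult)
  show "qpar k l = l * zpar k l" by (simp add: qpar_def)
  show "0 < qpar k l" using z2 assms unfolding qpar_def by simp
qed

definition Wp :: "nat \<Rightarrow> nat \<Rightarrow> nat \<Rightarrow> nat \<Rightarrow> nat \<Rightarrow> nat set" where
  "Wp k l a b i = {a * qpar k l + i * l + 1 .. a * qpar k l + qpar k l} \<union>
                  {b * qpar k l + 1 .. b * qpar k l + i * l + k - qpar k l}"

lemma il_bound:
  assumes "1 \<le> l" "2 * l < k" "i < zpar k l"
  shows "i * l + l \<le> qpar k l"
proof -
  have "i + 1 \<le> zpar k l" using assms by simp
  hence "(i + 1) * l \<le> zpar k l * l" by (rule mult_right_mono) simp
  thus ?thesis by (simp add: qpar_def mult.commute)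
qed

lemma nthP:
  assumes "m < 2 * q"
  shows "([a*q+1..<a*q+q+1] @ [b*q+1..<b*q+q+1]) ! m = (if m < q then a*q+1+m else b*q+1+(m-q))"
  using assms by (auto simp: nth_append)

lemma eseg_tup:
  assumes "1 \<le> l" "2 * l < k" "i < zpar k l"
  shows "eseg k l (tup k l \<sigma> a) (tup k l \<sigma> b) i = \<sigma> ` Wp k l a b i"
proof -
  define q where "q = qpar k l"
  note pr = params(1,2,3,4,6)[OF assms(1,2), folded q_def]
  have ib: "i * l + l \<le> q" using il_bound[OF assms] q_def by simp
  define P where "P = [a*q+1..<a*q+q+1] @ [b*q+1..<b*q+q+1]"
  have tt: "tup k l \<sigma> a @ tup k l \<sigma> b = map \<sigma> P" unfolding tup_def P_def q_def by simp
  have lenP: "length P = 2 * q" unfolding P_def by simp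
  have pn: "P ! m = (if m < q then a*q+1+m else b*q+1+(m-q))" if "m < 2 * q" for m
    unfolding P_def by (rule nthP[OF that])
  have jb: "i * l + j < 2 * q" if "j < k" for j using that ib pr(2) by linarith
  have "eseg k l (tup k l \<sigma> a) (tup k l \<sigma> b) i = \<sigma> ` ((\<lambda>j. P ! (i*l+j)) ` {0..<k})"
    unfolding eseg_def tt using jb lenP by (auto simp: image_iff)
  also have "(\<lambda>j. P ! (i*l+j)) ` {0..<k} = Wp k l a b i"
  proof (intro equalityI subsetI)
    fix x assume "x \<in> (\<lambda>j. P ! (i*l+j)) ` {0..<k}"
    then obtain j where j: "j < k" "x = P ! (i*l+j)" by auto
    show "x \<in> Wp k l a b i"
      using j jb[OF j(1)] pr ib pn[OF jb[OF j(1)]] unfolding Wp_def q_def[symmetric] by auto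
  next
    fix x assume x: "x \<in> Wp k l a b i"
    show "x \<in> (\<lambda>j. P ! (i*l+j)) ` {0..<k}"
    proof (cases "x \<le> a * q + q \<and> a * q + i * l + 1 \<le> x")
      case True
      define j where "j = x - (a*q + i*l + 1)"
      have "j < k" using True ib pr unfolding j_def by linarith
      moreover have "x = P ! (i*l+j)"
        using True pn[OF jb[OF \<open>j < k\<close>]] ib unfolding j_def by auto
      ultimately show ?thesis by auto
    next
      case False
      hence x2: "b*q + 1 \<le> x" "x \<le> b * q + i * l + k - q" using x unfolding Wp_def q_def by auto
      define j where "j = x - (b*q + 1) + q - i*l"
      have "j < k" using x2 ib pr unfolding j_def by linarith
      moreover have "x = P ! (i*l+j)"
        using x2 ib pn[OF jb[OF \<open>j < k\<close>]] pr unfolding j_def by auto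
      ultimately show ?thesis by auto
    qed
  qed
  finally show ?thesis .
qed

lemma block_eq:
  fixes q :: nat
  assumes "a * q < x" "x \<le> a * q + q" "b * q < x" "x \<le> b * q + q"
  shows "a = b"
proof (rule ccontr)
  assume "a \<noteq> b"
  then consider "a + 1 \<le> b" | "b + 1 \<le> a" by linarith
  thus False
  proof cases
    case 1 hence "(a+1) * q \<le> b * q" by (rule mult_right_mono) simp
    thus False using assms by (simp add: algebra_simps)
  next
    case 2 hence "(b+1) * q \<le> a * q" by (rule mult_right_mono) simp
    thus False using assms by (simp add: algebra_simps)
  qed
qed

lemma Wp_unique:
  assumes "1 \<le> l" "2 * l < k" "i1 < zpar k l" "i2 < zpar k l" "a1 \<noteq> b1" "a2 \<noteq> b2"
    and eq: "Wp k l a1 b1 i1 = Wp k l a2 b2 i2"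
  shows "a1 = a2 \<and> b1 = b2"
proof -
  define q where "q = qpar k l"
  note pr = params(1,2,3,4,6)[OF assms(1,2), folded q_def]
  have ib1: "i1 * l + l \<le> q" using il_bound[OF assms(1,2,3)] q_def by simp
  have ib2: "i2 * l + l \<le> q" using il_bound[OF assms(1,2,4)] q_def by simp
  have W: "x \<in> Wp k l a b i \<longleftrightarrow> (a*q + i*l < x \<and> x \<le> a*q+q) \<or> (b*q < x \<and> x \<le> b*q + i*l + k - q)" for x a b i
    unfolding Wp_def q_def by auto
  have x1: "a1*q + q \<in> Wp k l a2 b2 i2" unfolding eq[symmetric] W using ib1 assms(1) by auto
  have x2: "b1*q + 1 \<in> Wp k l a2 b2 i2" unfolding eq[symmetric] W using pr by auto
  have c1: "a1 = a2 \<or> (a1 = b2 \<and> q \<le> i2*l + k - q)"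
  proof -
    from x1[unfolded W] show ?thesis
    proof
      assume "a2*q + i2*l < a1*q+q \<and> a1*q+q \<le> a2*q+q"
      hence "a1 = a2" using block_eq[of a1 q "a1*q+q" a2] ib2 assms(1) pr by auto
      thus ?thesis by simp
    next
      assume h: "b2*q < a1*q+q \<and> a1*q+q \<le> b2*q + i2*l + k - q"
      have "i2*l + k \<le> 2*q" using ib2 pr by linarith
      hence "a1*q+q \<le> b2*q+q" using h by linarith
      hence "a1 = b2" using block_eq[of a1 q "a1*q+q" b2] h pr by auto
      moreover have "q \<le> i2*l + k - q" using h pr unfolding \<open>a1 = b2\<close> by linarith
      ultimately show ?thesis by simp
    qed
  qed
  have c2: "(b1 = a2 \<and> i2 * l = 0) \<or> b1 = b2"
  proof -
    from x2[unfolded W] show ?thesis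
    proof
      assume h: "a2*q + i2*l < b1*q+1 \<and> b1*q+1 \<le> a2*q+q"
      hence "b1 = a2" using block_eq[of b1 q "b1*q+1" a2] pr by auto
      thus ?thesis using h by simp
    next
      assume h: "b2*q < b1*q+1 \<and> b1*q+1 \<le> b2*q + i2*l + k - q"
      have "i2*l + k \<le> 2*q" using ib2 pr by linarith
      hence "b1*q+1 \<le> b2*q+q" using h by linarith
      hence "b1 = b2" using block_eq[of b1 q "b1*q+1" b2] h pr by auto
      thus ?thesis by simp
    qed
  qed
  show ?thesis using c1 c2 assms(5,6) pr by auto
qed

lemma Wp_distinct:
  assumes "1 \<le> l" "2 * l < k" "i1 < zpar k l" "i2 < zpar k l" "a \<noteq> b"
    and eq: "Wp k l a b i1 = Wp k l a b i2"
  shows "i1 = i2"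
proof -
  define q where "q = qpar k l"
  note pr = params(1,2,3,4,6)[OF assms(1,2), folded q_def]
  have ib1: "i1 * l + l \<le> q" using il_bound[OF assms(1,2,3)] q_def by simp
  have ib2: "i2 * l + l \<le> q" using il_bound[OF assms(1,2,4)] q_def by simp
  have W: "x \<in> Wp k l a b i \<longleftrightarrow> (a*q + i*l < x \<and> x \<le> a*q+q) \<or> (b*q < x \<and> x \<le> b*q + i*l + k - q)" for x i
    unfolding Wp_def q_def by auto
  have le: "i' * l \<le> i * l" if "Wp k l a b i = Wp k l a b i'" "i * l + l \<le> q" "i' * l + l \<le> q" for i i'
  proof -
    have "a*q + i*l + 1 \<in> Wp k l a b i'" unfolding that(1)[symmetric] W using that(2) assms(1) by auto
    from this[unfolded W] show ?thesis
    proof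
      assume "b*q < a*q + i*l + 1 \<and> a*q + i*l + 1 \<le> b*q + i'*l + k - q"
      hence "a = b" using block_eq[of a q "a*q + i*l + 1" b] that pr assms(1) by auto
      thus ?thesis using assms(5) by simp
    qed linarith
  qed
  have "i1 * l = i2 * l" using le[OF eq ib1 ib2] le[OF eq[symmetric] ib2 ib1] by linarith
  thus ?thesis using assms(1) by simp
qed

lemma Wp_sub:
  assumes "1 \<le> l" "2 * l < k" "i < zpar k l" "qpar k l dvd n" "a < n div qpar k l" "b < n div qpar k l"
  shows "Wp k l a b i \<subseteq> {1..n}"
proof -
  define q where "q = qpar k l"
  note pr = params(1,2,3,4,6)[OF assms(1,2), folded q_def]
  have ib: "i * l + l \<le> q" using il_bound[OF assms(1,2,3)] q_def by simp
  have n: "n = (n div q) * q" using assms(4) q_def by simp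
  have "a + 1 \<le> n div q" "b + 1 \<le> n div q" using assms(5,6) q_def by auto
  hence "(a+1) * q \<le> n" "(b+1)*q \<le> n" using n by (metis mult_le_mono1)+
  thus ?thesis unfolding Wp_def q_def[symmetric] using ib pr by auto
qed

lemma Wp_sub2:
  assumes "1 \<le> l" "2 * l < k" "i < zpar k l"
  shows "Wp k l a b i \<subseteq> {a * qpar k l + 1 .. a * qpar k l + qpar k l} \<union> {b * qpar k l + 1 .. b * qpar k l + qpar k l}"
proof -
  define q where "q = qpar k l"
  note pr = params(1,2,3,4,6)[OF assms(1,2), folded q_def]
  have ib: "i * l + l \<le> q" using il_bound[OF assms(1,2,3)] q_def by simp
  show ?thesis unfolding Wp_def q_def[symmetric] using ib pr by auto
qed

lemma arcs_elim:
  assumes "1 \<le> l" "2 * l < k" "\<alpha> \<in> arcs k l n H \<sigma>"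
  obtains a b where "\<alpha> = (tup k l \<sigma> a, tup k l \<sigma> b)" "a < n div qpar k l" "b < n div qpar k l" "a \<noteq> b"
     "\<And>i. i < zpar k l \<Longrightarrow> \<sigma> ` Wp k l a b i \<in> H"
     "owned k l \<alpha> = {\<sigma> ` Wp k l a b i | i. i < zpar k l}"
proof -
  from assms(3) obtain a b where ab: "\<alpha> = (tup k l \<sigma> a, tup k l \<sigma> b)" "a < n div qpar k l" "b < n div qpar k l"
    "tup k l \<sigma> a \<noteq> tup k l \<sigma> b" "precedes k l H (tup k l \<sigma> a) (tup k l \<sigma> b)"
    unfolding arcs_def by auto
  have "a \<noteq> b" using ab(4) by auto
  moreover have "\<And>i. i < zpar k l \<Longrightarrow> \<sigma> ` Wp k l a b i \<in> H"
    using ab(5) eseg_tup[OF assms(1,2)] unfolding precedes_def by metis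
  moreover have "owned k l \<alpha> = {\<sigma> ` Wp k l a b i | i. i < zpar k l}"
    unfolding owned_def ab(1) using eseg_tup[OF assms(1,2)] by fastforce
  ultimately show ?thesis using that ab by blast
qed

lemma arc_unique:
  assumes "1 \<le> l" "2 * l < k" "qpar k l dvd n" "\<sigma> permutes {1..n}"
    "\<alpha>1 \<in> arcs k l n H \<sigma>" "\<alpha>2 \<in> arcs k l n H \<sigma>" "e \<in> owned k l \<alpha>1" "e \<in> owned k l \<alpha>2"
  shows "\<alpha>1 = \<alpha>2"
proof -
  have inj: "inj_on \<sigma> {1..n}" using assms(4) by (meson bij_betw_imp_inj_on permutes_imp_bij)
  obtain a1 b1 where 1: "\<alpha>1 = (tup k l \<sigma> a1, tup k l \<sigma> b1)" "a1 < n div qpar k l" "b1 < n div qpar k l" "a1 \<noteq> b1"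
     "\<And>i. i < zpar k l \<Longrightarrow> \<sigma> ` Wp k l a1 b1 i \<in> H"
     "owned k l \<alpha>1 = {\<sigma> ` Wp k l a1 b1 i | i. i < zpar k l}"
    by (rule arcs_elim[OF assms(1,2,5)], blast)
  obtain a2 b2 where 2: "\<alpha>2 = (tup k l \<sigma> a2, tup k l \<sigma> b2)" "a2 < n div qpar k l" "b2 < n div qpar k l" "a2 \<noteq> b2"
     "\<And>i. i < zpar k l \<Longrightarrow> \<sigma> ` Wp k l a2 b2 i \<in> H"
     "owned k l \<alpha>2 = {\<sigma> ` Wp k l a2 b2 i | i. i < zpar k l}"
    by (rule arcs_elim[OF assms(1,2,6)], blast)
  obtain i1 where i1: "i1 < zpar k l" "e = \<sigma> ` Wp k l a1 b1 i1" using assms(7) unfolding 1(6) by blast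
  obtain i2 where i2: "i2 < zpar k l" "e = \<sigma> ` Wp k l a2 b2 i2" using assms(8) unfolding 2(6) by blast
  have "\<sigma> ` Wp k l a1 b1 i1 = \<sigma> ` Wp k l a2 b2 i2" using i1(2) i2(2) by (rule trans[OF sym])
  hence "Wp k l a1 b1 i1 = Wp k l a2 b2 i2"
    by (subst (asm) inj_on_image_eq_iff[OF inj Wp_sub[OF assms(1,2) i1(1) assms(3) 1(2,3)] Wp_sub[OF assms(1,2) i2(1) assms(3) 2(2,3)]])
  from Wp_unique[OF assms(1,2) i1(1) i2(1) 1(4) 2(4) this] have "a1 = a2" "b1 = b2" by auto
  thus ?thesis using 1(1) 2(1) by simp
qed

lemma owned_card:
  assumes "1 \<le> l" "2 * l < k" "qpar k l dvd n" "\<sigma> permutes {1..n}" "\<alpha> \<in> arcs k l n H \<sigma>"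
  shows "card (owned k l \<alpha>) = zpar k l"
proof -
  have inj: "inj_on \<sigma> {1..n}" using assms(4) by (meson bij_betw_imp_inj_on permutes_imp_bij)
  obtain a b where ab0: "\<alpha> = (tup k l \<sigma> a, tup k l \<sigma> b)" "a < n div qpar k l" "b < n div qpar k l" "a \<noteq> b"
     "\<And>i. i < zpar k l \<Longrightarrow> \<sigma> ` Wp k l a b i \<in> H"
     "owned k l \<alpha> = {\<sigma> ` Wp k l a b i | i. i < zpar k l}"
    by (rule arcs_elim[OF assms(1,2,5)], blast)
  note ab = ab0(2,3,4,6)
  have eq: "owned k l \<alpha> = (\<lambda>i. \<sigma> ` Wp k l a b i) ` {..<zpar k l}" using ab(4) by auto
  have "inj_on (\<lambda>i. \<sigma> ` Wp k l a b i) {..<zpar k l}"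
  proof (rule inj_onI)
    fix i1 i2 assume i: "i1 \<in> {..<zpar k l}" "i2 \<in> {..<zpar k l}" "\<sigma> ` Wp k l a b i1 = \<sigma> ` Wp k l a b i2"
    hence "Wp k l a b i1 = Wp k l a b i2"
      using inj_on_image_eq_iff[OF inj Wp_sub[OF assms(1,2) _ assms(3) ab(1,2)] Wp_sub[OF assms(1,2) _ assms(3) ab(1,2)]]
      by auto
    thus "i1 = i2" using Wp_distinct[OF assms(1,2) _ _ ab(3)] i by auto
  qed
  thus ?thesis unfolding eq by (simp add: card_image)
qed

lemma owned_in_H:
  assumes "1 \<le> l" "2 * l < k" "\<alpha> \<in> arcs k l n H \<sigma>" "e \<in> owned k l \<alpha>"
  shows "e \<in> H"
proof -
  obtain a b where ab0: "\<alpha> = (tup k l \<sigma> a, tup k l \<sigma> b)" "a < n div qpar k l" "b < n div qpar k l" "a \<noteq> b"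
     "\<And>i. i < zpar k l \<Longrightarrow> \<sigma> ` Wp k l a b i \<in> H"
     "owned k l \<alpha> = {\<sigma> ` Wp k l a b i | i. i < zpar k l}"
    by (rule arcs_elim[OF assms(1,2,3)], blast)
  obtain i where "i < zpar k l" "e = \<sigma> ` Wp k l a b i" using assms(4) unfolding ab0(6) by blast
  thus ?thesis using ab0(5) by simp
qed

lemma owned_union_card:
  assumes "1 \<le> l" "2 * l < k" "\<alpha> \<in> arcs k l n H \<sigma>" "e1 \<in> owned k l \<alpha>" "e2 \<in> owned k l \<alpha>"
  shows "card (e1 \<union> e2) \<le> 2 * qpar k l"
proof -
  obtain a b where ab0: "\<alpha> = (tup k l \<sigma> a, tup k l \<sigma> b)" "a < n div qpar k l" "b < n div qpar k l" "a \<noteq> b"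
     "\<And>i. i < zpar k l \<Longrightarrow> \<sigma> ` Wp k l a b i \<in> H"
     "owned k l \<alpha> = {\<sigma> ` Wp k l a b i | i. i < zpar k l}"
    by (rule arcs_elim[OF assms(1,2,3)], blast)
  note ab = ab0(6)
  define Z where "Z = {a * qpar k l + 1 .. a * qpar k l + qpar k l} \<union> {b * qpar k l + 1 .. b * qpar k l + qpar k l}"
  obtain i1 where i1: "i1 < zpar k l" "e1 = \<sigma> ` Wp k l a b i1" using assms(4) unfolding ab by blast
  obtain i2 where i2: "i2 < zpar k l" "e2 = \<sigma> ` Wp k l a b i2" using assms(5) unfolding ab by blast
  have "e1 \<subseteq> \<sigma> ` Z" unfolding i1(2) Z_def by (rule image_mono[OF Wp_sub2[OF assms(1,2) i1(1)]])
  moreover have "e2 \<subseteq> \<sigma> ` Z" unfolding i2(2) Z_def by (rule image_mono[OF Wp_sub2[OF assms(1,2) i2(1)]])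
  ultimately have "e1 \<union> e2 \<subseteq> \<sigma> ` Z" by (rule Un_least)
  hence "card (e1 \<union> e2) \<le> card (\<sigma> ` Z)" by (intro card_mono) (auto simp: Z_def)
  also have "\<dots> \<le> card Z" by (rule card_image_le) (simp add: Z_def)
  also have "\<dots> \<le> qpar k l + qpar k l" unfolding Z_def by (rule order_trans[OF card_Un_le]) simp
  finally show ?thesis by simp
qed



locale S8 =
  fixes k l n :: nat and H :: "nat set set" and \<sigma>s :: "nat \<Rightarrow> nat \<Rightarrow> nat" and r d :: nat
    and A1 A2 :: "nat set" and Bs :: "nat set set" and klo khi :: real
  assumes kl: "1 \<le> l" "2 * l < k"
    and n_dvd: "qpar k l dvd n"
    and H_kgraph: "kgraph k n H"
    and perm: "\<And>i. i < r \<Longrightarrow> \<sigma>s i permutes {1..n}"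
    and I_lo: "\<And>e. e \<in> H \<Longrightarrow> klo \<le> real (card (Iset k l n H \<sigma>s r e))"
    and I_hi: "\<And>e. e \<in> H \<Longrightarrow> real (card (Iset k l n H \<sigma>s r e)) \<le> khi"
    and klo_pos: "0 < klo"
    and cond: "\<And>S t. S \<subseteq> {1..n} \<Longrightarrow> 1 \<le> t \<Longrightarrow> t \<le> 2 * qpar k l - k \<Longrightarrow>
        card S = k + t \<Longrightarrow> card {i. i < r \<and> condensed k l n H (\<sigma>s i) S} \<le> 4 * qpar k l + 1"
    and d_range: "1 \<le> d \<and> d \<le> l"
    and A_sets: "A1 \<subseteq> {1..n} \<and> card A1 = k - d \<and> A2 \<subseteq> {1..n} \<and> card A2 = k - d \<and> A1 \<noteq> A2"
    and B_sets: "\<And>B. B \<in> Bs \<Longrightarrow> B \<subseteq> {1..n} \<and> card B = d \<and> A1 \<union> B \<in> H \<and> A2 \<union> B \<in> H"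
begin

abbreviation "z \<equiv> zpar k l"
abbreviation "q \<equiv> qpar k l"
abbreviation "I \<equiv> Iset k l n H \<sigma>s r"
definition "E0 = {e \<in> H. I e \<noteq> {}}"
definition "\<Omega> = PiE_dflt E0 0 I"
definition "U lab = (\<Union>i<r. Hprime k l n H \<sigma>s lab i)"
definition "X lab = card {B \<in> Bs. A1 \<union> B \<in> U lab \<and> A2 \<union> B \<in> U lab}"

lemma finH: "finite H"
proof -
  have "H \<subseteq> Pow {1..n}" using H_kgraph unfolding kgraph_def by auto
  thus ?thesis by (rule finite_subset) simp
qed

lemma finBs: "finite Bs"
proof -
  have "Bs \<subseteq> Pow {1..n}" using B_sets by auto
  thus ?thesis by (rule finite_subset) simp
qed

lemma finI: "finite (I e)" "I e \<subseteq> {..<r}"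
  unfolding Iset_def by auto

lemma finE0: "finite E0" unfolding E0_def using finH by simp

lemma fin\<Omega>: "finite \<Omega>" unfolding \<Omega>_def using finE0 finI by (intro finite_PiE_dflt) auto

lemma \<Omega>_ne: "\<Omega> \<noteq> {}" unfolding \<Omega>_def E0_def by simp

lemma label_eq: "label_pmf k l n H \<sigma>s r = pmf_of_set \<Omega>"
  unfolding label_pmf_def \<Omega>_def E0_def
  by (rule Pi_pmf_of_set) (use finH finI in auto)

lemma prob_eq: "measure_pmf.prob (label_pmf k l n H \<sigma>s r) {lab. P lab} = real (card {lab \<in> \<Omega>. P lab}) / real (card \<Omega>)"
  unfolding label_eq using measure_pmf_of_set[OF \<Omega>_ne fin\<Omega>, of "{lab. P lab}"]
  by (simp add: Int_def)

lemma U_iff: "e \<in> U lab \<longleftrightarrow> (\<exists>i<r. \<exists>\<alpha>\<in>arcs k l n H (\<sigma>s i). (\<forall>e'\<in>owned k l \<alpha>. lab e' = i) \<and> e \<in> owned k l \<alpha>)"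
  unfolding U_def Hprime_def by blast

lemma owned_E0:
  assumes "i < r" "\<alpha> \<in> arcs k l n H (\<sigma>s i)" "e \<in> owned k l \<alpha>"
  shows "e \<in> E0" "i \<in> I e"
proof -
  have "e \<in> H" by (rule owned_in_H[OF kl assms(2,3)])
  moreover have "i \<in> I e" using assms unfolding Iset_def Hsub_def by blast
  ultimately show "e \<in> E0" "i \<in> I e" unfolding E0_def by auto
qed

lemma disjAB:
  assumes "B \<in> Bs" "A = A1 \<or> A = A2"
  shows "A \<inter> B = {}"
proof -
  have fA: "finite A" "card A = k - d" using A_sets assms(2) finite_subset[of _ "{1..n}"] by auto
  have fB: "finite B" "card B = d" using B_sets[OF assms(1)] finite_subset[of _ "{1..n}"] by auto
  have "A \<union> B \<in> H" using B_sets[OF assms(1)] assms(2) by auto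
  hence "card (A \<union> B) = k" using H_kgraph unfolding kgraph_def by auto
  moreover have "card (A \<union> B) + card (A \<inter> B) = card A + card B" using card_Un_Int[OF fA(1) fB(1)] by simp
  moreover have "d < k" using d_range kl by simp
  ultimately have "card (A \<inter> B) = 0" using fA fB by simp
  thus ?thesis using fA by simp
qed

lemma injAB:
  assumes "A = A1 \<or> A = A2"
  shows "inj_on (\<lambda>B. A \<union> B) Bs"
proof (rule inj_onI)
  fix B B' assume "B \<in> Bs" "B' \<in> Bs" "A \<union> B = A \<union> B'"
  thus "B = B'" using disjAB[OF _ assms] by blast
qed

lemma lab_in_I: "lab \<in> \<Omega> \<Longrightarrow> f \<in> E0 \<Longrightarrow> lab f \<in> I f"
  unfolding \<Omega>_def PiE_dflt_def by auto

lemma U_change: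
  assumes lab: "lab \<in> \<Omega>" and f: "f \<in> E0" and y: "y \<in> I f"
    and ch: "(e \<in> U (lab(f:=y))) \<noteq> (e \<in> U lab)"
  shows "\<exists>i. i < r \<and> (i = lab f \<or> i = y) \<and> (\<exists>\<alpha>\<in>arcs k l n H (\<sigma>s i). f \<in> owned k l \<alpha> \<and> e \<in> owned k l \<alpha>)"
proof (cases "e \<in> U lab")
  case True
  then obtain i \<alpha> where i: "i < r" "\<alpha> \<in> arcs k l n H (\<sigma>s i)" "\<forall>e'\<in>owned k l \<alpha>. lab e' = i" "e \<in> owned k l \<alpha>"
    unfolding U_iff by blast
  have nU: "e \<notin> U (lab(f:=y))" using ch True by simp
  have "f \<in> owned k l \<alpha>"
  proof (rule ccontr)
    assume "f \<notin> owned k l \<alpha>"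
    hence "\<forall>e'\<in>owned k l \<alpha>. (lab(f:=y)) e' = i" using i(3) by auto
    hence "e \<in> U (lab(f:=y))" using i unfolding U_iff by blast
    thus False using nU by simp
  qed
  thus ?thesis using i by auto
next
  case False
  hence "e \<in> U (lab(f:=y))" using ch by simp
  then obtain i \<alpha> where i: "i < r" "\<alpha> \<in> arcs k l n H (\<sigma>s i)" "\<forall>e'\<in>owned k l \<alpha>. (lab(f:=y)) e' = i" "e \<in> owned k l \<alpha>"
    unfolding U_iff by blast
  have fo: "f \<in> owned k l \<alpha>"
  proof (rule ccontr)
    assume "f \<notin> owned k l \<alpha>"
    hence "\<forall>e'\<in>owned k l \<alpha>. lab e' = i" using i(3) by auto
    hence "e \<in> U lab" using i unfolding U_iff by blast
    thus False using False by simp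
  qed
  hence "i = y" using i(3) by auto
  thus ?thesis using i fo by auto
qed

definition "RA A = {f. \<exists>B\<in>Bs. \<exists>i<r. \<exists>\<alpha>\<in>arcs k l n H (\<sigma>s i). A \<union> B \<in> owned k l \<alpha> \<and> f \<in> owned k l \<alpha>}"
definition "R = RA A1 \<union> RA A2"

lemma chg_set:
  assumes "A = A1 \<or> A = A2" "i < r"
  shows "card {B \<in> Bs. \<exists>\<alpha>\<in>arcs k l n H (\<sigma>s i). f \<in> owned k l \<alpha> \<and> A \<union> B \<in> owned k l \<alpha>} \<le> z"
proof (cases "\<exists>\<alpha>\<in>arcs k l n H (\<sigma>s i). f \<in> owned k l \<alpha>")
  case False
  hence "{B \<in> Bs. \<exists>\<alpha>\<in>arcs k l n H (\<sigma>s i). f \<in> owned k l \<alpha> \<and> A \<union> B \<in> owned k l \<alpha>} = {}" by blast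
  thus ?thesis by (simp only: card.empty)
next
  case True
  then obtain \<alpha>0 where a0: "\<alpha>0 \<in> arcs k l n H (\<sigma>s i)" "f \<in> owned k l \<alpha>0" by blast
  have u: "\<And>\<alpha>. \<alpha> \<in> arcs k l n H (\<sigma>s i) \<Longrightarrow> f \<in> owned k l \<alpha> \<Longrightarrow> \<alpha> = \<alpha>0"
    by (rule arc_unique[OF kl n_dvd perm[OF assms(2)] _ a0(1) _ a0(2)])
  have sub: "{B \<in> Bs. \<exists>\<alpha>\<in>arcs k l n H (\<sigma>s i). f \<in> owned k l \<alpha> \<and> A \<union> B \<in> owned k l \<alpha>} \<subseteq> {B \<in> Bs. A \<union> B \<in> owned k l \<alpha>0}"
  proof
    fix B assume "B \<in> {B \<in> Bs. \<exists>\<alpha>\<in>arcs k l n H (\<sigma>s i). f \<in> owned k l \<alpha> \<and> A \<union> B \<in> owned k l \<alpha>}"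
    then obtain \<alpha> where "B \<in> Bs" "\<alpha> \<in> arcs k l n H (\<sigma>s i)" "f \<in> owned k l \<alpha>" "A \<union> B \<in> owned k l \<alpha>" by blast
    thus "B \<in> {B \<in> Bs. A \<union> B \<in> owned k l \<alpha>0}" using u by blast
  qed
  have cz: "card (owned k l \<alpha>0) = z" by (rule owned_card[OF kl n_dvd perm[OF assms(2)] a0(1)])
  have fo: "finite (owned k l \<alpha>0)" using cz params(1)[OF kl] by (intro card_ge_0_finite) simp
  have inj: "inj_on (\<lambda>B. A \<union> B) {B \<in> Bs. A \<union> B \<in> owned k l \<alpha>0}"
    by (rule inj_on_subset[OF injAB[OF assms(1)]]) blast
  have "card {B \<in> Bs. A \<union> B \<in> owned k l \<alpha>0} \<le> card (owned k l \<alpha>0)"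
    by (rule card_inj_on_le[OF inj _ fo]) blast
  also have "\<dots> = z" by (rule cz)
  finally have "card {B \<in> Bs. A \<union> B \<in> owned k l \<alpha>0} \<le> z" .
  moreover have "card {B \<in> Bs. \<exists>\<alpha>\<in>arcs k l n H (\<sigma>s i). f \<in> owned k l \<alpha> \<and> A \<union> B \<in> owned k l \<alpha>} \<le> card {B \<in> Bs. A \<union> B \<in> owned k l \<alpha>0}"
    by (rule card_mono[OF _ sub]) (use finBs in simp)
  ultimately show ?thesis by linarith
qed

lemma card_diff_le:
  assumes "finite S"
  shows "\<bar>real (card {x\<in>S. P x}) - real (card {x\<in>S. Q x})\<bar> \<le> real (card {x\<in>S. P x \<noteq> Q x})"
proof -
  have fu: "finite ({x\<in>S. Q x} \<union> {x\<in>S. P x \<noteq> Q x})" "finite ({x\<in>S. P x} \<union> {x\<in>S. P x \<noteq> Q x})"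
    using assms by auto
  have s1: "{x\<in>S. P x} \<subseteq> {x\<in>S. Q x} \<union> {x\<in>S. P x \<noteq> Q x}" by blast
  have s2: "{x\<in>S. Q x} \<subseteq> {x\<in>S. P x} \<union> {x\<in>S. P x \<noteq> Q x}" by blast
  have a: "card {x\<in>S. P x} \<le> card {x\<in>S. Q x} + card {x\<in>S. P x \<noteq> Q x}"
    by (rule order_trans[OF card_mono[OF fu(1) s1] card_Un_le])
  have b: "card {x\<in>S. Q x} \<le> card {x\<in>S. P x} + card {x\<in>S. P x \<noteq> Q x}"
    by (rule order_trans[OF card_mono[OF fu(2) s2] card_Un_le])
  show ?thesis using a b by linarith
qed

lemma lipschitz:
  assumes lab: "lab \<in> \<Omega>" and f: "f \<in> E0" and y: "y \<in> I f"
  shows "\<bar>real (X (lab(f:=y))) - real (X lab)\<bar> \<le> (if f \<in> R then 4 * real z else 0)"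
proof -
  define D where "D = {B \<in> Bs. (A1 \<union> B \<in> U (lab(f:=y))) \<noteq> (A1 \<union> B \<in> U lab) \<or> (A2 \<union> B \<in> U (lab(f:=y))) \<noteq> (A2 \<union> B \<in> U lab)}"
  define S where "S = (\<lambda>A i. {B \<in> Bs. \<exists>\<alpha>\<in>arcs k l n H (\<sigma>s i). f \<in> owned k l \<alpha> \<and> A \<union> B \<in> owned k l \<alpha>})"
  have lf: "lab f < r" "y < r" using lab_in_I[OF lab f] y finI(2) by auto
  have "\<bar>real (X (lab(f:=y))) - real (X lab)\<bar> \<le> real (card {B\<in>Bs. (A1 \<union> B \<in> U (lab(f:=y)) \<and> A2 \<union> B \<in> U (lab(f:=y))) \<noteq> (A1 \<union> B \<in> U lab \<and> A2 \<union> B \<in> U lab)})"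
    unfolding X_def by (rule card_diff_le[OF finBs])
  also have "\<dots> \<le> real (card D)"
  proof (intro of_nat_mono card_mono)
    show "finite D" unfolding D_def using finBs by simp
  qed (unfold D_def, blast)
  finally have 1: "\<bar>real (X (lab(f:=y))) - real (X lab)\<bar> \<le> real (card D)" .
  have DS: "D \<subseteq> S A1 (lab f) \<union> S A1 y \<union> S A2 (lab f) \<union> S A2 y"
  proof
    fix B assume B: "B \<in> D"
    then consider "(A1 \<union> B \<in> U (lab(f:=y))) \<noteq> (A1 \<union> B \<in> U lab)" | "(A2 \<union> B \<in> U (lab(f:=y))) \<noteq> (A2 \<union> B \<in> U lab)"
      unfolding D_def by blast
    thus "B \<in> S A1 (lab f) \<union> S A1 y \<union> S A2 (lab f) \<union> S A2 y"
    proof cases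
      case 1 from U_change[OF lab f y this] show ?thesis using B unfolding S_def D_def by auto
    next
      case 2 from U_change[OF lab f y this] show ?thesis using B unfolding S_def D_def by auto
    qed
  qed
  show ?thesis
  proof (cases "f \<in> R")
    case True
    have "card D \<le> card (S A1 (lab f) \<union> S A1 y \<union> S A2 (lab f) \<union> S A2 y)"
      by (rule card_mono[OF _ DS]) (auto simp: S_def intro: finite_subset[OF _ finBs])
    also have "\<dots> \<le> card (S A1 (lab f)) + card (S A1 y) + card (S A2 (lab f)) + card (S A2 y)"
    proof -
      have "card (S A1 (lab f) \<union> S A1 y \<union> S A2 (lab f) \<union> S A2 y) \<le> card (S A1 (lab f) \<union> S A1 y \<union> S A2 (lab f)) + card (S A2 y)"
        by (rule card_Un_le)
      moreover have "card (S A1 (lab f) \<union> S A1 y \<union> S A2 (lab f)) \<le> card (S A1 (lab f) \<union> S A1 y) + card (S A2 (lab f))"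
        by (rule card_Un_le)
      moreover have "card (S A1 (lab f) \<union> S A1 y) \<le> card (S A1 (lab f)) + card (S A1 y)"
        by (rule card_Un_le)
      ultimately show ?thesis by linarith
    qed
    also have "\<dots> \<le> z + z + z + z"
      unfolding S_def by (intro add_mono chg_set) (use lf in auto)
    finally have "real (card D) \<le> 4 * real z" by simp
    thus ?thesis using 1 True by simp
  next
    case False
    have "D = {}"
    proof (rule ccontr)
      assume "D \<noteq> {}"
      then obtain B where "B \<in> S A1 (lab f) \<union> S A1 y \<union> S A2 (lab f) \<union> S A2 y" using DS by blast
      hence "f \<in> R" unfolding S_def R_def RA_def using lf by blast
      thus False using False by simp
    qed
    thus ?thesis using 1 False by simp
  qed
qed

lemma card_owned_union:
  assumes "i < r" "e \<in> H"
  shows "card (\<Union>{owned k l \<alpha> | \<alpha>. \<alpha> \<in> arcs k l n H (\<sigma>s i) \<and> e \<in> owned k l \<alpha>}) \<le> z"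
proof (cases "\<exists>\<alpha>\<in>arcs k l n H (\<sigma>s i). e \<in> owned k l \<alpha>")
  case False
  hence "{owned k l \<alpha> | \<alpha>. \<alpha> \<in> arcs k l n H (\<sigma>s i) \<and> e \<in> owned k l \<alpha>} = {}" by blast
  thus ?thesis by (simp only: Union_empty card.empty)
next
  case True
  then obtain \<alpha>0 where a0: "\<alpha>0 \<in> arcs k l n H (\<sigma>s i)" "e \<in> owned k l \<alpha>0" by blast
  have "{owned k l \<alpha> | \<alpha>. \<alpha> \<in> arcs k l n H (\<sigma>s i) \<and> e \<in> owned k l \<alpha>} = {owned k l \<alpha>0}"
  proof -
    have u: "\<And>\<alpha>. \<alpha> \<in> arcs k l n H (\<sigma>s i) \<Longrightarrow> e \<in> owned k l \<alpha> \<Longrightarrow> \<alpha> = \<alpha>0"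
      by (rule arc_unique[OF kl n_dvd perm[OF assms(1)] _ a0(1) _ a0(2)])
    show ?thesis using a0 u by blast
  qed
  thus ?thesis using owned_card[OF kl n_dvd perm[OF assms(1)] a0(1)] by simp
qed

lemma card_RA:
  assumes "A = A1 \<or> A = A2"
  shows "real (card (RA A)) \<le> real z * khi * real (card Bs)"
proof -
  define F where "F = (\<lambda>B i. \<Union>{owned k l \<alpha> | \<alpha>. \<alpha> \<in> arcs k l n H (\<sigma>s i) \<and> A \<union> B \<in> owned k l \<alpha>})"
  have eq: "RA A \<subseteq> (\<Union>B\<in>Bs. \<Union>i\<in>I (A \<union> B). F B i)"
  proof
    fix f assume "f \<in> RA A"
    then obtain B i \<alpha> where "B \<in> Bs" "i < r" "\<alpha> \<in> arcs k l n H (\<sigma>s i)" "A \<union> B \<in> owned k l \<alpha>" "f \<in> owned k l \<alpha>"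
      unfolding RA_def by blast
    moreover have "i \<in> I (A \<union> B)" using owned_E0(2)[OF calculation(2,3,4)] .
    ultimately show "f \<in> (\<Union>B\<in>Bs. \<Union>i\<in>I (A \<union> B). F B i)" unfolding F_def by blast
  qed
  have AB: "A \<union> B \<in> H" if "B \<in> Bs" for B using B_sets[OF that] assms by auto
  have cF: "card (F B i) \<le> z" if "B \<in> Bs" "i \<in> I (A \<union> B)" for B i
    unfolding F_def by (rule card_owned_union) (use that finI(2) AB in auto)
  have fF: "finite (F B i)" if "B \<in> Bs" "i \<in> I (A \<union> B)" for B i
  proof -
    have "F B i \<subseteq> H" unfolding F_def using owned_in_H[OF kl] by blast
    thus ?thesis using finH finite_subset by blast
  qed
  have "card (RA A) \<le> card (\<Union>B\<in>Bs. \<Union>i\<in>I (A \<union> B). F B i)"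
    by (rule card_mono[OF _ eq]) (use finBs finI fF in auto)
  also have "\<dots> \<le> (\<Sum>B\<in>Bs. card (\<Union>i\<in>I (A \<union> B). F B i))"
    by (rule card_UN_le[OF finBs])
  also have "\<dots> \<le> (\<Sum>B\<in>Bs. \<Sum>i\<in>I (A \<union> B). card (F B i))"
    by (intro sum_mono card_UN_le finI)
  also have "\<dots> \<le> (\<Sum>B\<in>Bs. \<Sum>i\<in>I (A \<union> B). z)"
    by (intro sum_mono cF) auto
  finally have "real (card (RA A)) \<le> (\<Sum>B\<in>Bs. real z * real (card (I (A \<union> B))))"
    by (simp add: of_nat_mono mult.commute flip: of_nat_sum of_nat_mult)
  also have "\<dots> \<le> (\<Sum>B\<in>Bs. real z * khi)"
    by (intro sum_mono mult_left_mono I_hi AB) auto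
  finally show ?thesis by (simp add: mult.commute)
qed

lemma card_R: "real (card R) \<le> 2 * real z * khi * real (card Bs)"
proof -
  have "card R \<le> card (RA A1) + card (RA A2)" unfolding R_def by (rule card_Un_le)
  hence "real (card R) \<le> real (card (RA A1)) + real (card (RA A2))" by linarith
  thus ?thesis using card_RA[of A1] card_RA[of A2] by simp
qed

end



lemma finite_arcs: "finite (arcs k l n H \<sigma>)"
proof -
  have "arcs k l n H \<sigma> \<subseteq> (\<lambda>(a,b). (tup k l \<sigma> a, tup k l \<sigma> b)) ` ({..<n div qpar k l} \<times> {..<n div qpar k l})"
    unfolding arcs_def by auto
  thus ?thesis by (rule finite_subset) simp
qed

context S8 begin

lemma owned_sub_E0: "i < r \<Longrightarrow> \<alpha> \<in> arcs k l n H (\<sigma>s i) \<Longrightarrow> owned k l \<alpha> \<subseteq> E0"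
  using owned_E0(1) by blast

lemma card_I_pos: "x \<in> E0 \<Longrightarrow> card (I x) > 0"
  unfolding E0_def using finI(1) by (simp add: card_gt_0_iff)

lemma prob_fix:
  assumes F: "F \<subseteq> E0"
  shows "real (card {lab \<in> \<Omega>. \<forall>f\<in>F. lab f = t f}) / real (card \<Omega>) \<le> (1 / klo) ^ card F"
proof -
  define B' where "B' = (\<lambda>x. if x \<in> F then I x \<inter> {t x} else I x)"
  have eq: "{lab \<in> \<Omega>. \<forall>f\<in>F. lab f = t f} = PiE_dflt E0 0 B'"
    unfolding \<Omega>_def PiE_dflt_def B'_def using F by auto
  have fE: "finite E0" by (rule finE0)
  have c1: "card (PiE_dflt E0 0 B') = (\<Prod>x\<in>E0. card (B' x))"
    by (rule card_PiE_dflt[OF fE]) (simp add: B'_def finI)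
  have c2: "card \<Omega> = (\<Prod>x\<in>E0. card (I x))"
    unfolding \<Omega>_def by (rule card_PiE_dflt[OF fE]) (simp add: finI)
  have "real (card {lab \<in> \<Omega>. \<forall>f\<in>F. lab f = t f}) / real (card \<Omega>) = (\<Prod>x\<in>E0. real (card (B' x)) / real (card (I x)))"
    unfolding eq c1 c2 by (simp add: prod_dividef)
  also have "\<dots> \<le> (\<Prod>x\<in>E0. if x \<in> F then 1 / klo else 1)"
  proof (rule prod_mono, rule conjI)
    fix x assume x: "x \<in> E0"
    show "0 \<le> real (card (B' x)) / real (card (I x))" by simp
    have cp: "real (card (I x)) > 0" using card_I_pos[OF x] by simp
    show "real (card (B' x)) / real (card (I x)) \<le> (if x \<in> F then 1 / klo else 1)"
    proof (cases "x \<in> F")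
      case True
      have "card (B' x) \<le> 1" unfolding B'_def using True
        by (metis card_mono finite.emptyI finite.insertI inf_le2 is_singletonI is_singleton_altdef)
      hence "real (card (B' x)) / real (card (I x)) \<le> 1 / real (card (I x))"
        using cp by (intro divide_right_mono) auto
      also have "\<dots> \<le> 1 / klo"
        using I_lo[of x] x klo_pos unfolding E0_def by (intro divide_left_mono) auto
      finally show ?thesis using True by simp
    next
      case False thus ?thesis unfolding B'_def using cp by simp
    qed
  qed
  also have "\<dots> = (1 / klo) ^ card F"
  proof -
    have "(\<Prod>x\<in>E0. if x \<in> F then 1 / klo else 1) = (\<Prod>x\<in>E0 \<inter> F. 1 / klo)"
      using fE by (simp add: prod.If_cases)
    also have "E0 \<inter> F = F" using F by blast
    finally show ?thesis by simp
  qed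
  finally show ?thesis .
qed

definition "Ta e = {(i, \<alpha>). i < r \<and> \<alpha> \<in> arcs k l n H (\<sigma>s i) \<and> e \<in> owned k l \<alpha>}"
definition "Ev p p' = {lab \<in> \<Omega>. (\<forall>f\<in>owned k l (snd p). lab f = fst p) \<and> (\<forall>f\<in>owned k l (snd p'). lab f = fst p')}"

lemma finTa: "finite (Ta e)"
proof -
  have "Ta e \<subseteq> {..<r} \<times> (\<Union>i<r. arcs k l n H (\<sigma>s i))" unfolding Ta_def by auto
  thus ?thesis by (rule finite_subset) (auto intro: finite_arcs)
qed

lemma Ta_fst_inj: "inj_on fst (Ta e)"
proof (rule inj_onI)
  fix p p' assume p: "p \<in> Ta e" "p' \<in> Ta e" "fst p = fst p'"
  obtain i \<alpha> where 1: "p = (i, \<alpha>)" "i < r" "\<alpha> \<in> arcs k l n H (\<sigma>s i)" "e \<in> owned k l \<alpha>"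
    using p(1) unfolding Ta_def by blast
  obtain i' \<alpha>' where 2: "p' = (i', \<alpha>')" "i' < r" "\<alpha>' \<in> arcs k l n H (\<sigma>s i')" "e \<in> owned k l \<alpha>'"
    using p(2) unfolding Ta_def by blast
  have "i = i'" using p(3) 1(1) 2(1) by simp
  hence "\<alpha> = \<alpha>'" using arc_unique[OF kl n_dvd perm[OF 1(2)] 1(3) _ 1(4)] 2(3,4) by simp
  thus "p = p'" using 1(1) 2(1) \<open>i = i'\<close> by simp
qed

lemma Ta_fst: "fst ` Ta e \<subseteq> I e"
  unfolding Ta_def using owned_E0(2) by auto

lemma card_Ta: "card (Ta e) \<le> card (I e)"
proof -
  have "card (Ta e) = card (fst ` Ta e)" by (rule card_image[OF Ta_fst_inj, symmetric])
  also have "\<dots> \<le> card (I e)" by (rule card_mono[OF finI(1) Ta_fst])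
  finally show ?thesis .
qed

lemma pair_bound:
  assumes e1H: "e1 \<in> H" and e2H: "e2 \<in> H" and ne: "e1 \<noteq> e2"
  shows "real (card {lab \<in> \<Omega>. e1 \<in> U lab \<and> e2 \<in> U lab}) / real (card \<Omega>)
         \<le> real (4 * qpar k l + 1) * (1 / klo) ^ z + khi\<^sup>2 * (1 / klo) ^ (2 * z)"
proof -
  define T where "T = Ta e1 \<times> Ta e2"
  define T1 where "T1 = {\<tau> \<in> T. fst \<tau> = snd \<tau>}"
  have finT: "finite T" unfolding T_def using finTa by simp
  have T1sub: "T1 \<subseteq> T" unfolding T1_def by blast
  have cardO: "real (card \<Omega>) > 0" using fin\<Omega> \<Omega>_ne by (simp add: card_gt_0_iff)
  have finEv: "finite (Ev p p')" for p p' unfolding Ev_def using fin\<Omega> by simp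
  have sub: "{lab \<in> \<Omega>. e1 \<in> U lab \<and> e2 \<in> U lab} \<subseteq> (\<Union>\<tau>\<in>T. Ev (fst \<tau>) (snd \<tau>))"
  proof
    fix lab assume "lab \<in> {lab \<in> \<Omega>. e1 \<in> U lab \<and> e2 \<in> U lab}"
    then obtain i \<alpha> i' \<alpha>' where "lab \<in> \<Omega>" "i < r" "\<alpha> \<in> arcs k l n H (\<sigma>s i)" "\<forall>e'\<in>owned k l \<alpha>. lab e' = i" "e1 \<in> owned k l \<alpha>"
       "i' < r" "\<alpha>' \<in> arcs k l n H (\<sigma>s i')" "\<forall>e'\<in>owned k l \<alpha>'. lab e' = i'" "e2 \<in> owned k l \<alpha>'"
      unfolding U_iff by blast
    hence "((i,\<alpha>),(i',\<alpha>')) \<in> T" "lab \<in> Ev (i,\<alpha>) (i',\<alpha>')" unfolding T_def Ta_def Ev_def by auto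
    thus "lab \<in> (\<Union>\<tau>\<in>T. Ev (fst \<tau>) (snd \<tau>))" by force
  qed
  have "card {lab \<in> \<Omega>. e1 \<in> U lab \<and> e2 \<in> U lab} \<le> card (\<Union>\<tau>\<in>T. Ev (fst \<tau>) (snd \<tau>))"
    by (rule card_mono[OF _ sub]) (use finT finEv in auto)
  also have "\<dots> \<le> (\<Sum>\<tau>\<in>T. card (Ev (fst \<tau>) (snd \<tau>)))" by (rule card_UN_le[OF finT])
  finally have "real (card {lab \<in> \<Omega>. e1 \<in> U lab \<and> e2 \<in> U lab}) / real (card \<Omega>)
       \<le> (\<Sum>\<tau>\<in>T. real (card (Ev (fst \<tau>) (snd \<tau>))) / real (card \<Omega>))"
    using cardO by (simp add: sum_divide_distrib[symmetric] divide_right_mono flip: of_nat_sum)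
  also have "\<dots> = (\<Sum>\<tau>\<in>T1. real (card (Ev (fst \<tau>) (snd \<tau>))) / real (card \<Omega>))
                 + (\<Sum>\<tau>\<in>T - T1. real (card (Ev (fst \<tau>) (snd \<tau>))) / real (card \<Omega>))"
    by (subst sum.subset_diff[OF T1sub finT]) (rule add.commute)
  also have "\<dots> \<le> (\<Sum>\<tau>\<in>T1. (1 / klo) ^ z) + (\<Sum>\<tau>\<in>T - T1. (1 / klo) ^ (2 * z))"
  proof (rule add_mono; rule sum_mono)
    fix \<tau> assume "\<tau> \<in> T1"
    then obtain i \<alpha> where \<tau>: "\<tau> = ((i,\<alpha>),(i,\<alpha>))" "i < r" "\<alpha> \<in> arcs k l n H (\<sigma>s i)"
      unfolding T1_def T_def Ta_def by auto
    have "Ev (fst \<tau>) (snd \<tau>) = {lab \<in> \<Omega>. \<forall>f\<in>owned k l \<alpha>. lab f = (\<lambda>_. i) f}"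
      unfolding Ev_def \<tau> by auto
    moreover have "card (owned k l \<alpha>) = z" by (rule owned_card[OF kl n_dvd perm[OF \<tau>(2)] \<tau>(3)])
    ultimately show "real (card (Ev (fst \<tau>) (snd \<tau>))) / real (card \<Omega>) \<le> (1 / klo) ^ z"
      using prob_fix[OF owned_sub_E0[OF \<tau>(2,3)], of "\<lambda>_. i"] by simp
  next
    fix \<tau> assume \<tau>T: "\<tau> \<in> T - T1"
    then obtain i \<alpha> i' \<alpha>' where \<tau>: "\<tau> = ((i,\<alpha>),(i',\<alpha>'))" "i < r" "\<alpha> \<in> arcs k l n H (\<sigma>s i)"
      "i' < r" "\<alpha>' \<in> arcs k l n H (\<sigma>s i')" "(i,\<alpha>) \<noteq> (i',\<alpha>')"
      unfolding T1_def T_def Ta_def by auto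
    show "real (card (Ev (fst \<tau>) (snd \<tau>))) / real (card \<Omega>) \<le> (1 / klo) ^ (2 * z)"
    proof (cases "owned k l \<alpha> \<inter> owned k l \<alpha>' = {}")
      case False
      then obtain f where f: "f \<in> owned k l \<alpha>" "f \<in> owned k l \<alpha>'" by blast
      have "i \<noteq> i'"
      proof
        assume "i = i'"
        hence "\<alpha> = \<alpha>'" using arc_unique[OF kl n_dvd perm[OF \<tau>(2)] \<tau>(3) _ f(1)] \<tau>(5) f(2) by simp
        thus False using \<tau>(6) \<open>i = i'\<close> by simp
      qed
      hence "Ev (fst \<tau>) (snd \<tau>) = {}" unfolding Ev_def \<tau> using f by auto
      thus ?thesis by simp
    next
      case True
      define tt where "tt = (\<lambda>f. if f \<in> owned k l \<alpha> then i else i')"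
      have "Ev (fst \<tau>) (snd \<tau>) = {lab \<in> \<Omega>. \<forall>f\<in>owned k l \<alpha> \<union> owned k l \<alpha>'. lab f = tt f}"
        unfolding Ev_def \<tau> tt_def using True by auto
      moreover have "card (owned k l \<alpha> \<union> owned k l \<alpha>') = 2 * z"
      proof -
        have c: "card (owned k l \<alpha>) = z" "card (owned k l \<alpha>') = z"
          using owned_card[OF kl n_dvd perm[OF \<tau>(2)] \<tau>(3)] owned_card[OF kl n_dvd perm[OF \<tau>(4)] \<tau>(5)] .
        have "finite (owned k l \<alpha>)" "finite (owned k l \<alpha>')"
          using c params(1)[OF kl] by (auto intro: card_ge_0_finite)
        thus ?thesis using card_Un_disjoint[OF _ _ True] c by simp
      qed
      moreover have "owned k l \<alpha> \<union> owned k l \<alpha>' \<subseteq> E0"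
        using owned_sub_E0[OF \<tau>(2,3)] owned_sub_E0[OF \<tau>(4,5)] by blast
      ultimately show ?thesis using prob_fix[of "owned k l \<alpha> \<union> owned k l \<alpha>'" tt] by simp
    qed
  qed
  also have "\<dots> = real (card T1) * (1 / klo) ^ z + real (card (T - T1)) * (1 / klo) ^ (2 * z)" by simp
  also have "\<dots> \<le> real (4 * qpar k l + 1) * (1 / klo) ^ z + khi\<^sup>2 * (1 / klo) ^ (2 * z)"
  proof (rule add_mono; rule mult_right_mono)
    show "0 \<le> (1 / klo) ^ z" "0 \<le> (1 / klo) ^ (2 * z)" using klo_pos by simp_all
    have T1eq: "T1 = (\<lambda>p. (p, p)) ` (Ta e1 \<inter> Ta e2)" unfolding T1_def T_def by auto
    have "card T1 \<le> card (Ta e1 \<inter> Ta e2)" unfolding T1eq by (rule card_image_le) (use finTa in simp)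
    also have "\<dots> = card (fst ` (Ta e1 \<inter> Ta e2))"
      by (rule card_image[symmetric]) (rule inj_on_subset[OF Ta_fst_inj], blast)
    also have "\<dots> \<le> 4 * qpar k l + 1"
    proof (cases "Ta e1 \<inter> Ta e2 = {}")
      case True thus ?thesis by simp
    next
      case False
      then obtain i0 \<alpha>0 where p0: "i0 < r" "\<alpha>0 \<in> arcs k l n H (\<sigma>s i0)" "e1 \<in> owned k l \<alpha>0" "e2 \<in> owned k l \<alpha>0"
        unfolding Ta_def by auto
      define S where "S = e1 \<union> e2"
      have ck: "card e1 = k" "card e2 = k" using e1H e2H H_kgraph unfolding kgraph_def by auto
      have Ssub: "S \<subseteq> {1..n}" using e1H e2H H_kgraph unfolding kgraph_def S_def by auto
      have fS: "finite S" using Ssub by (rule finite_subset) simp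
      have S2q: "card S \<le> 2 * qpar k l" unfolding S_def by (rule owned_union_card[OF kl p0(2,3,4)])
      have Sk: "card S \<ge> k + 1"
      proof (rule ccontr)
        assume "\<not> card S \<ge> k + 1"
        moreover have "card e1 \<le> card S" by (rule card_mono[OF fS]) (simp add: S_def)
        ultimately have "card S = k" using ck by simp
        hence "e1 = S" "e2 = S" using card_subset_eq[OF fS, of e1] card_subset_eq[OF fS, of e2] ck
          unfolding S_def by auto
        thus False using ne by simp
      qed
      have "fst ` (Ta e1 \<inter> Ta e2) \<subseteq> {i. i < r \<and> condensed k l n H (\<sigma>s i) S}"
      proof
        fix i assume "i \<in> fst ` (Ta e1 \<inter> Ta e2)"
        then obtain \<alpha> where "i < r" "\<alpha> \<in> arcs k l n H (\<sigma>s i)" "e1 \<in> owned k l \<alpha>" "e2 \<in> owned k l \<alpha>"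
          unfolding Ta_def by auto
        thus "i \<in> {i. i < r \<and> condensed k l n H (\<sigma>s i) S}"
          unfolding condensed_def S_def using e1H e2H ne by blast
      qed
      hence "card (fst ` (Ta e1 \<inter> Ta e2)) \<le> card {i. i < r \<and> condensed k l n H (\<sigma>s i) S}"
        by (rule card_mono[rotated]) simp
      also have "\<dots> \<le> 4 * qpar k l + 1"
        by (rule cond[OF Ssub, of "card S - k"]) (use S2q Sk in auto)
      finally show ?thesis .
    qed
    finally show "real (card T1) \<le> real (4 * qpar k l + 1)" by simp
    have "card (T - T1) \<le> card T" by (rule card_mono[OF finT]) blast
    also have "\<dots> = card (Ta e1) * card (Ta e2)" unfolding T_def by (rule card_cartesian_product)
    finally have "real (card (T - T1)) \<le> real (card (Ta e1)) * real (card (Ta e2))"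
      by (simp flip: of_nat_mult)
    also have "\<dots> \<le> khi * khi"
    proof (rule mult_mono)
      show "real (card (Ta e1)) \<le> khi" using card_Ta[of e1] I_hi[OF e1H] by linarith
      show "real (card (Ta e2)) \<le> khi" using card_Ta[of e2] I_hi[OF e2H] by linarith
      show "0 \<le> khi" using I_hi[OF e1H] by linarith
    qed simp
    finally show "real (card (T - T1)) \<le> khi\<^sup>2" by (simp add: power2_eq_square)
  qed
  finally show ?thesis .
qed

lemma avg_X: "avg \<Omega> (\<lambda>lab. real (X lab)) \<le> real (card Bs) * (real (4 * qpar k l + 1) * (1 / klo) ^ z + khi\<^sup>2 * (1 / klo) ^ (2 * z))"
proof -
  define P where "P = (\<lambda>lab B. A1 \<union> B \<in> U lab \<and> A2 \<union> B \<in> U lab)"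
  define \<beta> where "\<beta> = real (4 * qpar k l + 1) * (1 / klo) ^ z + khi\<^sup>2 * (1 / klo) ^ (2 * z)"
  have Xs: "real (X lab) = (\<Sum>B\<in>Bs. if P lab B then 1 else 0)" for lab
  proof -
    have "real (X lab) = (\<Sum>B\<in>{B\<in>Bs. P lab B}. 1)" unfolding X_def P_def by (rule real_of_card)
    also have "\<dots> = (\<Sum>B\<in>Bs. if P lab B then 1 else 0)" by (rule sum.inter_filter[OF finBs])
    finally show ?thesis .
  qed
  have cs: "(\<Sum>lab\<in>\<Omega>. if P lab B then 1 else 0) = real (card {lab\<in>\<Omega>. P lab B})" for B
  proof -
    have "(\<Sum>lab\<in>\<Omega>. if P lab B then 1 else (0::real)) = (\<Sum>lab\<in>{lab\<in>\<Omega>. P lab B}. 1)"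
      by (rule sum.inter_filter[OF fin\<Omega>, symmetric])
    also have "\<dots> = real (card {lab\<in>\<Omega>. P lab B})" by (rule real_of_card[symmetric])
    finally show ?thesis .
  qed
  have each: "real (card {lab\<in>\<Omega>. P lab B}) / real (card \<Omega>) \<le> \<beta>" if B: "B \<in> Bs" for B
  proof -
    have h: "A1 \<union> B \<in> H" "A2 \<union> B \<in> H" using B_sets[OF B] by auto
    have "A1 \<union> B \<noteq> A2 \<union> B"
    proof
      assume "A1 \<union> B = A2 \<union> B"
      hence "A1 = A2" using disjAB[OF B, of A1] disjAB[OF B, of A2] by blast
      thus False using A_sets by simp
    qed
    from pair_bound[OF h this] show ?thesis unfolding P_def \<beta>_def .
  qed
  have "avg \<Omega> (\<lambda>lab. real (X lab)) = (\<Sum>lab\<in>\<Omega>. \<Sum>B\<in>Bs. if P lab B then 1 else 0) / real (card \<Omega>)"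
    unfolding avg_def Xs ..
  also have "\<dots> = (\<Sum>B\<in>Bs. \<Sum>lab\<in>\<Omega>. if P lab B then 1 else 0) / real (card \<Omega>)"
    by (subst sum.swap) (rule refl)
  also have "\<dots> = (\<Sum>B\<in>Bs. real (card {lab\<in>\<Omega>. P lab B})) / real (card \<Omega>)"
    unfolding cs ..
  also have "\<dots> = (\<Sum>B\<in>Bs. real (card {lab\<in>\<Omega>. P lab B}) / real (card \<Omega>))"
    by (rule sum_divide_distrib)
  also have "\<dots> \<le> (\<Sum>B\<in>Bs. \<beta>)" by (rule sum_mono[OF each])
  also have "\<dots> = real (card Bs) * \<beta>" by simp
  finally show ?thesis unfolding \<beta>_def .
qed

lemma R_sub: "R \<subseteq> E0"
  unfolding R_def RA_def using owned_E0(1) by blast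

lemma tail:
  assumes t: "t > 0" and Bne: "Bs \<noteq> {}"
    and \<theta>: "\<theta> \<ge> real (card Bs) * (real (4 * qpar k l + 1) * (1 / klo) ^ z + khi\<^sup>2 * (1 / klo) ^ (2 * z)) + t"
  shows "measure_pmf.prob (label_pmf k l n H \<sigma>s r)
            {lab. real (card {B \<in> Bs.
                      A1 \<union> B \<in> (\<Union>i < r. Hprime k l n H \<sigma>s lab i) \<and>
                      A2 \<union> B \<in> (\<Union>i < r. Hprime k l n H \<sigma>s lab i)}) > \<theta>}
         \<le> exp (- (t\<^sup>2 / (16 * real z ^ 3 * khi * real (card Bs))))"
proof -
  define g where "g = (\<lambda>lab. real (X lab))"
  define c where "c = (\<lambda>f. if f \<in> R then 4 * real z else 0)"
  define C where "C = 32 * real z ^ 3 * khi * real (card Bs)"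
  obtain B0 where B0: "B0 \<in> Bs" using Bne by blast
  have khi_pos: "khi > 0"
    using I_lo[of "A1 \<union> B0"] I_hi[of "A1 \<union> B0"] B_sets[OF B0] klo_pos by linarith
  have zpos: "real z > 0" using params(1)[OF kl] by simp
  have cBs: "real (card Bs) > 0" using Bne finBs by (simp add: card_gt_0_iff)
  have Cpos: "C > 0" unfolding C_def using khi_pos zpos cBs by simp
  define lam where "lam = 4 * t / C"
  have lam0: "lam \<ge> 0" unfolding lam_def using t Cpos by simp
  have sc: "(\<Sum>x\<in>E0. (c x)\<^sup>2) \<le> C"
  proof -
    have "(\<Sum>x\<in>E0. (c x)\<^sup>2) = (\<Sum>x\<in>E0. if x \<in> R then 16 * real z ^ 2 else 0)"
      unfolding c_def by (intro sum.cong) (auto simp: power2_eq_square)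
    also have "\<dots> = (\<Sum>x\<in>E0 \<inter> R. 16 * real z ^ 2)" using finE0 by (simp add: sum.If_cases)
    also have "E0 \<inter> R = R" using R_sub by blast
    also have "(\<Sum>x\<in>R. 16 * real z ^ 2) = 16 * real z ^ 2 * real (card R)" by simp
    also have "\<dots> \<le> 16 * real z ^ 2 * (2 * real z * khi * real (card Bs))"
      by (rule mult_left_mono[OF card_R]) simp
    also have "\<dots> = C" unfolding C_def by (simp add: power3_eq_cube power2_eq_square)
    finally show ?thesis .
  qed
  have ev: "{lab. real (card {B \<in> Bs.
                      A1 \<union> B \<in> (\<Union>i < r. Hprime k l n H \<sigma>s lab i) \<and>
                      A2 \<union> B \<in> (\<Union>i < r. Hprime k l n H \<sigma>s lab i)}) > \<theta>} = {lab. g lab > \<theta>}"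
    unfolding g_def X_def U_def ..
  have "measure_pmf.prob (label_pmf k l n H \<sigma>s r) {lab. g lab > \<theta>} = real (card {lab\<in>\<Omega>. g lab > \<theta>}) / real (card \<Omega>)"
    by (rule prob_eq)
  also have "\<dots> \<le> real (card {f\<in>\<Omega>. g f \<ge> avg \<Omega> g + t}) / real (card \<Omega>)"
  proof (intro divide_right_mono of_nat_mono card_mono)
    show "finite {f\<in>\<Omega>. g f \<ge> avg \<Omega> g + t}" using fin\<Omega> by simp
    show "{lab\<in>\<Omega>. g lab > \<theta>} \<subseteq> {f\<in>\<Omega>. g f \<ge> avg \<Omega> g + t}"
    proof (rule subsetI)
      fix lab assume "lab \<in> {lab\<in>\<Omega>. g lab > \<theta>}"
      hence "lab \<in> \<Omega>" "g lab > \<theta>" by auto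
      moreover have "avg \<Omega> g \<le> real (card Bs) * (real (4 * qpar k l + 1) * (1 / klo) ^ z + khi\<^sup>2 * (1 / klo) ^ (2 * z))"
        unfolding g_def by (rule avg_X)
      ultimately show "lab \<in> {f\<in>\<Omega>. g f \<ge> avg \<Omega> g + t}" using \<theta> by simp
    qed
  qed simp
  also have "\<dots> \<le> exp (lam\<^sup>2 * (\<Sum>x\<in>E0. (c x)\<^sup>2) / 8 - lam * t)"
    unfolding \<Omega>_def
  proof (rule mcdiarmid_tail[OF finE0 _ lam0])
    show "\<And>x. x \<in> E0 \<Longrightarrow> finite (I x) \<and> I x \<noteq> {}" unfolding E0_def using finI by auto
    show "\<And>f x y. f \<in> PiE_dflt E0 0 I \<Longrightarrow> x \<in> E0 \<Longrightarrow> y \<in> I x \<Longrightarrow> \<bar>g (f(x := y)) - g f\<bar> \<le> c x"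
      unfolding g_def c_def using lipschitz[unfolded \<Omega>_def] by blast
  qed
  also have "\<dots> \<le> exp (lam\<^sup>2 * C / 8 - lam * t)"
  proof -
    have "lam\<^sup>2 * (\<Sum>x\<in>E0. (c x)\<^sup>2) \<le> lam\<^sup>2 * C" by (rule mult_left_mono[OF sc]) simp
    hence "lam\<^sup>2 * (\<Sum>x\<in>E0. (c x)\<^sup>2) / 8 - lam * t \<le> lam\<^sup>2 * C / 8 - lam * t" by linarith
    thus ?thesis by (subst exp_le_cancel_iff)
  qed
  also have "lam\<^sup>2 * C / 8 - lam * t = - (2 * t\<^sup>2 / C)"
    unfolding lam_def using Cpos by (simp add: field_simps power2_eq_square)
  also have "2 * t\<^sup>2 / C = t\<^sup>2 / (16 * real z ^ 3 * khi * real (card Bs))"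
    unfolding C_def by simp
  finally show ?thesis unfolding ev .
qed

end



lemma per_j:
  fixes k l n :: nat and H :: "nat set set" and \<epsilon> p :: real and \<sigma>s :: "nat \<Rightarrow> nat \<Rightarrow> nat"
    and d :: nat and A1 A2 :: "nat set" and Bs :: "nat set set"
  defines "r \<equiv> rpar k l n \<epsilon> p"
  defines "\<kappa> \<equiv> kappa k n \<epsilon>"
  defines "K \<equiv> k + 2 * qpar k l + 1"
  assumes kl: "1 \<le> l" "2 * l < k"
    and n_dvd: "qpar k l dvd n"
    and eps_pos: "0 < \<epsilon>"
    and H_kgraph: "kgraph k n H"
    and perm: "\<And>i. i < r \<Longrightarrow> \<sigma>s i permutes {1..n}"
    and I_size: "\<And>e. e \<in> H \<Longrightarrow>
        (1 - (real (zpar k l) + 2) * \<epsilon>) * \<kappa> \<le> real (card (Iset k l n H \<sigma>s r e)) \<and>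
        real (card (Iset k l n H \<sigma>s r e)) \<le> (1 + (real (zpar k l) + 2) * \<epsilon>) * \<kappa>"
    and cond: "\<And>S t. S \<subseteq> {1..n} \<Longrightarrow> 1 \<le> t \<Longrightarrow> t \<le> 2 * qpar k l - k \<Longrightarrow>
        card S = k + t \<Longrightarrow> card {i. i < r \<and> condensed k l n H (\<sigma>s i) S} \<le> 4 * qpar k l + 1"
    and d_range: "1 \<le> d \<and> d \<le> l"
    and A_sets: "A1 \<subseteq> {1..n} \<and> card A1 = k - d \<and> A2 \<subseteq> {1..n} \<and> card A2 = k - d \<and> A1 \<noteq> A2"
    and B_sets: "\<And>B. B \<in> Bs \<Longrightarrow> B \<subseteq> {1..n} \<and> card B = d \<and> A1 \<union> B \<in> H \<and> A2 \<union> B \<in> H"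
    and n3: "3 \<le> n"
    and del: "(real (zpar k l) + 2) * \<epsilon> \<le> 1 / 2"
    and Fb: "real (4 * qpar k l + 1) / (1 - (real (zpar k l) + 2) * \<epsilon>) ^ zpar k l
             + (1 + (real (zpar k l) + 2) * \<epsilon>)\<^sup>2 / (1 - (real (zpar k l) + 2) * \<epsilon>) ^ (2 * zpar k l)
             \<le> 6 * real (qpar k l)"
    and Yb: "real (card Bs) / \<kappa> ^ (2 * zpar k l + 1) / ln (real n)
             \<ge> 32 * real (zpar k l) ^ 3 * (real K + 1) / real (qpar k l) ^ 2"
  shows "measure_pmf.prob (label_pmf k l n H \<sigma>s r)
            {lab. real (card {B \<in> Bs.
                      A1 \<union> B \<in> (\<Union>i < r. Hprime k l n H \<sigma>s lab i) \<and>
                      A2 \<union> B \<in> (\<Union>i < r. Hprime k l n H \<sigma>s lab i)})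
                  > 7 * real (qpar k l) * real (card Bs) / \<kappa> ^ zpar k l}
            * real n ^ K \<le> 1 / real n"
proof -
  define z where "z = zpar k l"
  define q where "q = qpar k l"
  define \<delta> where "\<delta> = (real z + 2) * \<epsilon>"
  define klo where "klo = (1 - \<delta>) * \<kappa>"
  define khi where "khi = (1 + \<delta>) * \<kappa>"
  note pr = params[OF kl, folded z_def q_def]
  have d0: "0 \<le> \<delta>" "\<delta> \<le> 1/2" using del eps_pos unfolding \<delta>_def z_def by auto
  have lnn: "ln (real n) \<ge> 1"
  proof -
    have "exp 1 \<le> (3::real)" using exp_le by simp
    also have "\<dots> \<le> real n" using n3 by simp
    finally show ?thesis using n3 by (subst ln_ge_iff) auto
  qed
  have eps1: "\<epsilon> \<le> 1"
  proof -
    have "(real z + 2) * \<epsilon> \<ge> 1 * \<epsilon>" using eps_pos by (intro mult_right_mono) auto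
    thus ?thesis using d0 unfolding \<delta>_def by simp
  qed
  have kap1: "\<kappa> \<ge> 1"
  proof -
    have "\<epsilon>\<^sup>2 \<le> 1" using eps1 eps_pos by (simp add: power_le_one)
    have "6 * (real k + 1) * ln (real n) \<ge> 1" using lnn
      by (smt (verit) mult_le_cancel_left1 of_nat_0_le_iff)
    hence "1 \<le> 6 * (real k + 1) * ln (real n) / 1" by simp
    also have "\<dots> \<le> 6 * (real k + 1) * ln (real n) / \<epsilon>\<^sup>2"
      using eps_pos \<open>\<epsilon>\<^sup>2 \<le> 1\<close> lnn by (intro divide_left_mono) auto
    finally show ?thesis unfolding \<kappa>_def kappa_def .
  qed
  have klo_pos: "klo > 0" unfolding klo_def using d0 kap1 by simp
  interpret S: S8 k l n H \<sigma>s r d A1 A2 Bs klo khi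
  proof
    show "\<And>e. e \<in> H \<Longrightarrow> klo \<le> real (card (Iset k l n H \<sigma>s r e))"
      using I_size unfolding klo_def \<delta>_def z_def by blast
    show "\<And>e. e \<in> H \<Longrightarrow> real (card (Iset k l n H \<sigma>s r e)) \<le> khi"
      using I_size unfolding khi_def \<delta>_def z_def by blast
  qed (use kl n_dvd H_kgraph perm klo_pos cond d_range A_sets B_sets in auto)
  define Y where "Y = real (card Bs) / \<kappa> ^ (2 * z + 1) / ln (real n)"
  define M where "M = 32 * real z ^ 3 * (real K + 1) / real q ^ 2"
  have Mpos: "M > 0" unfolding M_def using pr by simp
  have YM: "Y \<ge> M" using Yb unfolding Y_def M_def z_def q_def .
  have Bpos: "real (card Bs) > 0"
  proof (rule ccontr)
    assume "\<not> real (card Bs) > 0"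
    hence "Y = 0" unfolding Y_def by simp
    thus False using YM Mpos by simp
  qed
  hence Bne: "Bs \<noteq> {}" by auto
  define t where "t = real q * real (card Bs) / \<kappa> ^ z"
  have kz: "\<kappa> ^ z > 0" using kap1 by simp
  have tpos: "t > 0" unfolding t_def using pr Bpos kz by simp
  have \<beta>: "real (card Bs) * (real (4 * q + 1) * (1 / klo) ^ z + khi\<^sup>2 * (1 / klo) ^ (2 * z))
            \<le> 6 * real q * real (card Bs) / \<kappa> ^ z"
  proof -
    have om: "1 - \<delta> > 0" using d0 by simp
    have a: "(1 / klo) ^ z = 1 / (1 - \<delta>) ^ z * (1 / \<kappa> ^ z)"
      unfolding klo_def by (simp add: power_mult_distrib power_divide)
    have "khi\<^sup>2 * (1 / klo) ^ (2 * z) = (1 + \<delta>)\<^sup>2 / (1 - \<delta>) ^ (2 * z) * (\<kappa>\<^sup>2 / \<kappa> ^ (2 * z))"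
      unfolding klo_def khi_def by (simp add: power_mult_distrib power_divide)
    also have "\<kappa>\<^sup>2 / \<kappa> ^ (2 * z) \<le> 1 / \<kappa> ^ z"
    proof -
      have "\<kappa>\<^sup>2 \<le> \<kappa> ^ z" using kap1 pr(1) by (intro power_increasing) auto
      hence "\<kappa>\<^sup>2 * \<kappa> ^ z \<le> \<kappa> ^ z * \<kappa> ^ z" using kz by (intro mult_right_mono) auto
      hence "\<kappa>\<^sup>2 * \<kappa> ^ z \<le> \<kappa> ^ (2 * z)" by (simp add: power_add[symmetric] mult_2)
      moreover have "\<kappa> ^ (2 * z) > 0" using kap1 by simp
      ultimately show ?thesis using kz by (simp add: divide_simps mult.commute)
    qed
    hence "(1 + \<delta>)\<^sup>2 / (1 - \<delta>) ^ (2 * z) * (\<kappa>\<^sup>2 / \<kappa> ^ (2 * z)) \<le> (1 + \<delta>)\<^sup>2 / (1 - \<delta>) ^ (2 * z) * (1 / \<kappa> ^ z)"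
      using om by (intro mult_left_mono) auto
    finally have b: "khi\<^sup>2 * (1 / klo) ^ (2 * z) \<le> (1 + \<delta>)\<^sup>2 / (1 - \<delta>) ^ (2 * z) * (1 / \<kappa> ^ z)" .
    have "real (4 * q + 1) * (1 / klo) ^ z + khi\<^sup>2 * (1 / klo) ^ (2 * z)
          \<le> real (4 * q + 1) * (1 / (1 - \<delta>) ^ z * (1 / \<kappa> ^ z)) + (1 + \<delta>)\<^sup>2 / (1 - \<delta>) ^ (2 * z) * (1 / \<kappa> ^ z)"
      using b unfolding a by linarith
    also have "\<dots> = (real (4 * q + 1) / (1 - \<delta>) ^ z + (1 + \<delta>)\<^sup>2 / (1 - \<delta>) ^ (2 * z)) * (1 / \<kappa> ^ z)"
      by (simp only: divide_inverse distrib_right mult_1_left mult.assoc)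
    also have "\<dots> \<le> 6 * real q * (1 / \<kappa> ^ z)"
      using Fb kz unfolding \<delta>_def z_def q_def by (intro mult_right_mono) auto
    finally have "real (4 * q + 1) * (1 / klo) ^ z + khi\<^sup>2 * (1 / klo) ^ (2 * z) \<le> 6 * real q * (1 / \<kappa> ^ z)" .
    hence "real (card Bs) * (real (4 * q + 1) * (1 / klo) ^ z + khi\<^sup>2 * (1 / klo) ^ (2 * z)) \<le> real (card Bs) * (6 * real q * (1 / \<kappa> ^ z))"
      using Bpos by (intro mult_left_mono) auto
    also have "\<dots> = 6 * real q * real (card Bs) / \<kappa> ^ z" by simp
    finally show ?thesis .
  qed
  have \<theta>: "7 * real q * real (card Bs) / \<kappa> ^ z
           \<ge> real (card Bs) * (real (4 * q + 1) * (1 / klo) ^ z + khi\<^sup>2 * (1 / klo) ^ (2 * z)) + t"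
  proof -
    have e7: "7 * real q * real (card Bs) / \<kappa> ^ z = 6 * real q * real (card Bs) / \<kappa> ^ z + t"
      unfolding t_def using kz by (simp add: field_simps)
    show ?thesis using \<beta> e7 by linarith
  qed
  have tl: "measure_pmf.prob (label_pmf k l n H \<sigma>s r)
            {lab. real (card {B \<in> Bs.
                      A1 \<union> B \<in> (\<Union>i < r. Hprime k l n H \<sigma>s lab i) \<and>
                      A2 \<union> B \<in> (\<Union>i < r. Hprime k l n H \<sigma>s lab i)})
                  > 7 * real q * real (card Bs) / \<kappa> ^ z}
         \<le> exp (- (t\<^sup>2 / (16 * real z ^ 3 * khi * real (card Bs))))"
    using S.tail[OF tpos Bne \<theta>[unfolded z_def q_def]] unfolding z_def q_def .
  have ex: "t\<^sup>2 / (16 * real z ^ 3 * khi * real (card Bs)) \<ge> (real K + 1) * ln (real n)"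
  proof -
    have zp: "real z > 0" using pr by simp
    have khi_le: "khi \<le> 3/2 * \<kappa>" unfolding khi_def using d0 kap1 by simp
    have khipos: "khi > 0" unfolding khi_def using d0 kap1 by simp
    have "t\<^sup>2 / (16 * real z ^ 3 * khi * real (card Bs)) \<ge> t\<^sup>2 / (16 * real z ^ 3 * (3/2 * \<kappa>) * real (card Bs))"
      using khi_le khipos zp Bpos tpos by (intro divide_left_mono mult_left_mono mult_right_mono mult_pos_pos) auto
    also have "t\<^sup>2 / (16 * real z ^ 3 * (3/2 * \<kappa>) * real (card Bs)) = real q ^ 2 / (24 * real z ^ 3) * (real (card Bs) / \<kappa> ^ (2 * z + 1))"
    proof -
      have pw: "\<kappa> ^ z * \<kappa> ^ z = \<kappa> ^ (z * 2)" by (simp add: power_add[symmetric] mult_2_right)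
      show ?thesis
        unfolding t_def using kz kap1 zp Bpos pw by (simp add: field_simps power2_eq_square power_add power_mult_distrib mult_2)
    qed
    also have "real (card Bs) / \<kappa> ^ (2 * z + 1) = Y * ln (real n)" unfolding Y_def using lnn by simp
    finally have 1: "t\<^sup>2 / (16 * real z ^ 3 * khi * real (card Bs)) \<ge> real q ^ 2 / (24 * real z ^ 3) * (Y * ln (real n))" .
    have "real q ^ 2 / (24 * real z ^ 3) * (Y * ln (real n)) \<ge> real q ^ 2 / (24 * real z ^ 3) * (M * ln (real n))"
      using YM lnn pr by (intro mult_left_mono mult_right_mono) auto
    also have "real q ^ 2 / (24 * real z ^ 3) * (M * ln (real n)) = 4/3 * ((real K + 1) * ln (real n))"
      unfolding M_def using pr zp by (simp add: field_simps)
    also have "\<dots> \<ge> (real K + 1) * ln (real n)" using lnn by simp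
    finally show ?thesis using 1 by linarith
  qed
  have "exp (- (t\<^sup>2 / (16 * real z ^ 3 * khi * real (card Bs)))) \<le> exp (- ((real K + 1) * ln (real n)))"
    using ex by simp
  also have "\<dots> = 1 / real n ^ (K + 1)"
  proof -
    have np: "real n > 0" using n3 by simp
    have "ln (real n ^ (K+1)) = real (K+1) * ln (real n)" by (rule ln_realpow)
    hence "(real K + 1) * ln (real n) = ln (real n ^ (K+1))" by simp
    hence "exp (- ((real K + 1) * ln (real n))) = inverse (exp (ln (real n ^ (K+1))))" by (simp add: exp_minus)
    also have "\<dots> = 1 / real n ^ (K + 1)" using np by (simp add: divide_inverse)
    finally show ?thesis .
  qed
  finally have P: "measure_pmf.prob (label_pmf k l n H \<sigma>s r)
            {lab. real (card {B \<in> Bs.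
                      A1 \<union> B \<in> (\<Union>i < r. Hprime k l n H \<sigma>s lab i) \<and>
                      A2 \<union> B \<in> (\<Union>i < r. Hprime k l n H \<sigma>s lab i)})
                  > 7 * real q * real (card Bs) / \<kappa> ^ z} \<le> 1 / real n ^ (K + 1)"
    using tl by linarith
  have npos: "real n > 0" using n3 by simp
  have "measure_pmf.prob (label_pmf k l n H \<sigma>s r)
            {lab. real (card {B \<in> Bs.
                      A1 \<union> B \<in> (\<Union>i < r. Hprime k l n H \<sigma>s lab i) \<and>
                      A2 \<union> B \<in> (\<Union>i < r. Hprime k l n H \<sigma>s lab i)})
                  > 7 * real q * real (card Bs) / \<kappa> ^ z} * real n ^ K \<le> 1 / real n ^ (K + 1) * real n ^ K"
    using P npos by (intro mult_right_mono) auto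
  also have "\<dots> = 1 / real n" using npos by (simp add: field_simps)
  finally show ?thesis unfolding z_def q_def .
qed

theorem lemma8:
  fixes k l :: nat
    and n :: "nat \<Rightarrow> nat"
    and H :: "nat \<Rightarrow> nat set set"
    and \<epsilon> p :: "nat \<Rightarrow> real"
    and \<sigma>s :: "nat \<Rightarrow> nat \<Rightarrow> nat \<Rightarrow> nat"
    and d :: "nat \<Rightarrow> nat"
    and A1 A2 :: "nat \<Rightarrow> nat set"
    and \<B> :: "nat \<Rightarrow> nat set set"
  assumes kl: "1 \<le> l" "2 * l < k"
    and n_lim: "filterlim n at_top sequentially"
    and n_dvd: "\<And>j. qpar k l dvd n j"
    and eps_pos: "\<And>j. 0 < \<epsilon> j"
    and eps_lim: "\<epsilon> \<longlonglongrightarrow> 0"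
    and p_pos: "\<And>j. 0 < p j" "\<And>j. p j \<le> 1"
    and H_kgraph: "\<And>j. kgraph k (n j) (H j)"
    and H_reg: "\<And>j. regular k l (n j) (H j) (\<epsilon> j) (p j)"
    and perm: "\<And>j i. i < rpar k l (n j) (\<epsilon> j) (p j) \<Longrightarrow> \<sigma>s j i permutes {1..n j}"
    and I_size: "\<And>j e. e \<in> H j \<Longrightarrow>
        (1 - (real (zpar k l) + 2) * \<epsilon> j) * kappa k (n j) (\<epsilon> j)
          \<le> real (card (Iset k l (n j) (H j) (\<sigma>s j) (rpar k l (n j) (\<epsilon> j) (p j)) e)) \<and>
        real (card (Iset k l (n j) (H j) (\<sigma>s j) (rpar k l (n j) (\<epsilon> j) (p j)) e))
          \<le> (1 + (real (zpar k l) + 2) * \<epsilon> j) * kappa k (n j) (\<epsilon> j)"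
    and cond: "\<And>j S t. S \<subseteq> {1..n j} \<Longrightarrow> 1 \<le> t \<Longrightarrow> t \<le> 2 * qpar k l - k \<Longrightarrow>
        card S = k + t \<Longrightarrow>
        card {i. i < rpar k l (n j) (\<epsilon> j) (p j) \<and> condensed k l (n j) (H j) (\<sigma>s j i) S}
          \<le> 4 * qpar k l + 1"
    and d_range: "\<And>j. 1 \<le> d j \<and> d j \<le> l"
    and A_sets: "\<And>j. A1 j \<subseteq> {1..n j} \<and> card (A1 j) = k - d j \<and>
                      A2 j \<subseteq> {1..n j} \<and> card (A2 j) = k - d j \<and> A1 j \<noteq> A2 j"
    and B_sets: "\<And>j B. B \<in> \<B> j \<Longrightarrow> B \<subseteq> {1..n j} \<and> card B = d j \<and>
                      A1 j \<union> B \<in> H j \<and> A2 j \<union> B \<in> H j"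
    and B_large: "filterlim (\<lambda>j. real (card (\<B> j)) / kappa k (n j) (\<epsilon> j) ^ (2 * zpar k l + 1)
                                  / ln (real (n j))) at_top sequentially"
  shows "(\<lambda>j. measure_pmf.prob
            (label_pmf k l (n j) (H j) (\<sigma>s j) (rpar k l (n j) (\<epsilon> j) (p j)))
            {lab. real (card {B \<in> \<B> j.
                      A1 j \<union> B \<in> (\<Union>i < rpar k l (n j) (\<epsilon> j) (p j). Hprime k l (n j) (H j) (\<sigma>s j) lab i) \<and>
                      A2 j \<union> B \<in> (\<Union>i < rpar k l (n j) (\<epsilon> j) (p j). Hprime k l (n j) (H j) (\<sigma>s j) lab i)})
                  > 7 * real (qpar k l) * real (card (\<B> j)) / kappa k (n j) (\<epsilon> j) ^ zpar k l}
            * real (n j) ^ (k + 2 * qpar k l + 1)) \<longlonglongrightarrow> 0"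
proof -
  define z where "z = zpar k l"
  define q where "q = qpar k l"
  define K where "K = k + 2 * qpar k l + 1"
  define M where "M = 32 * real z ^ 3 * (real K + 1) / real q ^ 2"
  define F where "F = (\<lambda>e::real. real (4 * q + 1) / (1 - (real z + 2) * e) ^ z
             + (1 + (real z + 2) * e)\<^sup>2 / (1 - (real z + 2) * e) ^ (2 * z))"
  note pr = params[OF kl, folded z_def q_def]
  define P where "P = (\<lambda>j. measure_pmf.prob
            (label_pmf k l (n j) (H j) (\<sigma>s j) (rpar k l (n j) (\<epsilon> j) (p j)))
            {lab. real (card {B \<in> \<B> j.
                      A1 j \<union> B \<in> (\<Union>i < rpar k l (n j) (\<epsilon> j) (p j). Hprime k l (n j) (H j) (\<sigma>s j) lab i) \<and>
                      A2 j \<union> B \<in> (\<Union>i < rpar k l (n j) (\<epsilon> j) (p j). Hprime k l (n j) (H j) (\<sigma>s j) lab i)})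
                  > 7 * real (qpar k l) * real (card (\<B> j)) / kappa k (n j) (\<epsilon> j) ^ zpar k l}
            * real (n j) ^ (k + 2 * qpar k l + 1))"
  have ev_n: "eventually (\<lambda>j. 3 \<le> n j) sequentially"
    using n_lim unfolding filterlim_at_top by blast
  have ev_d: "eventually (\<lambda>j. (real z + 2) * \<epsilon> j < 1 / 2) sequentially"
  proof -
    have "(\<lambda>j. (real z + 2) * \<epsilon> j) \<longlonglongrightarrow> (real z + 2) * 0"
      by (intro tendsto_intros eps_lim)
    from order_tendstoD(2)[OF this, of "1/2"] show ?thesis by simp
  qed
  have ev_F: "eventually (\<lambda>j. F (\<epsilon> j) < 6 * real q) sequentially"
  proof -
    have "(\<lambda>j. F (\<epsilon> j)) \<longlonglongrightarrow> real (4 * q + 1) / (1 - (real z + 2) * 0) ^ z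
             + (1 + (real z + 2) * 0)\<^sup>2 / (1 - (real z + 2) * 0) ^ (2 * z)"
      unfolding F_def by (intro tendsto_intros eps_lim) auto
    moreover have "real (4 * q + 1) / (1 - (real z + 2) * 0) ^ z
             + (1 + (real z + 2) * 0)\<^sup>2 / (1 - (real z + 2) * 0) ^ (2 * z) < 6 * real q"
    proof -
      have "1 * 2 \<le> l * z" using kl(1) pr(1) by (rule mult_le_mono)
      hence "q \<ge> 2" using pr(5) by simp
      hence "real q \<ge> 2" by linarith
      thus ?thesis by simp
    qed
    ultimately show ?thesis by (rule order_tendstoD(2))
  qed
  have ev_Y: "eventually (\<lambda>j. M \<le> real (card (\<B> j)) / kappa k (n j) (\<epsilon> j) ^ (2 * zpar k l + 1) / ln (real (n j))) sequentially"
    using B_large unfolding filterlim_at_top by blast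
  have ev: "eventually (\<lambda>j. P j \<le> 1 / real (n j)) sequentially"
    using ev_n ev_d ev_F ev_Y
  proof eventually_elim
    case (elim j)
    show ?case unfolding P_def
    proof (rule per_j)
      show "(real (zpar k l) + 2) * \<epsilon> j \<le> 1 / 2" using elim(2) unfolding z_def by simp
      show "real (4 * qpar k l + 1) / (1 - (real (zpar k l) + 2) * \<epsilon> j) ^ zpar k l
             + (1 + (real (zpar k l) + 2) * \<epsilon> j)\<^sup>2 / (1 - (real (zpar k l) + 2) * \<epsilon> j) ^ (2 * zpar k l)
             \<le> 6 * real (qpar k l)" using elim(3) unfolding F_def z_def q_def by simp
      show "real (card (\<B> j)) / kappa k (n j) (\<epsilon> j) ^ (2 * zpar k l + 1) / ln (real (n j))
             \<ge> 32 * real (zpar k l) ^ 3 * (real (k + 2 * qpar k l + 1) + 1) / real (qpar k l) ^ 2"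
        using elim(4) unfolding M_def K_def z_def q_def .
    qed (use kl n_dvd eps_pos H_kgraph H_reg perm I_size cond d_range A_sets B_sets elim(1) in auto)
  qed
  have lo: "eventually (\<lambda>j. 0 \<le> P j) sequentially" unfolding P_def by simp
  have up: "(\<lambda>j. 1 / real (n j)) \<longlonglongrightarrow> 0"
  proof -
    have "filterlim (\<lambda>j. real (n j)) at_top sequentially"
      by (rule filterlim_compose[OF filterlim_real_sequentially n_lim])
    from tendsto_inverse_0_at_top[OF this] show ?thesis by (simp add: divide_inverse)
  qed
  have "P \<longlonglongrightarrow> 0" by (rule tendsto_sandwich[OF lo ev tendsto_const up])
  thus ?thesis unfolding P_def .
qed


end
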